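(* For every complex Banach space $X$ with open unit ball $B$ and every $f\in A_u(B)$, $$Cl_B(f,0)=\bigcap_{Y}\widehat{f|_{B_Y}}\big(M_0(B_Y)\big),$$ where the intersection runs over all closed subspaces $Y\subset X$ with $\dim(X/Y)<\infty$, $B_Y$ denotes the open unit ball of $Y$, and $M_0(B_Y)$ is the fiber over $0$ of the spectrum of $A_u(B_Y)$.
   Context: For a Banach space $Z$ with open unit ball $B_Z$, $A_u(B_Z)$ is the uniform algebra of bounded holomorphic functions on $B_Z$ that are uniformly continuous; $M_0(B_Z)$ is the set of nonzero multiplicative linear functionals $\tau$ on $A_u(B_Z)$ with $\tau(z^* )=0$ for every $z^*\in Z^*$; $\hat g(\tau)=\tau(g)$ is the Gelfand transform. $Cl_{B}(f,0)$ is the set of all limits $\lim_\alpha f(x_\alpha)$ over nets $(x_\alpha)$ in $B$ converging weakly to $0$. *)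

theory Defs
  imports "HOL-Analysis.Analysis"
begin

class complex_normed_vector = real_normed_vector +
  fixes scaleC :: "complex \<Rightarrow> 'a \<Rightarrow> 'a" (infixr \<open>*\<^sub>C\<close> 75)
  assumes scaleC_add_right: "a *\<^sub>C (x + y) = a *\<^sub>C x + a *\<^sub>C y"
    and scaleC_add_left: "(a + b) *\<^sub>C x = a *\<^sub>C x + b *\<^sub>C x"
    and scaleC_scaleC: "a *\<^sub>C (b *\<^sub>C x) = (a * b) *\<^sub>C x"
    and scaleC_one: "1 *\<^sub>C x = x"
    and scaleC_of_real: "(of_real r) *\<^sub>C x = r *\<^sub>R x"
    and norm_scaleC: "norm (a *\<^sub>C x) = cmod a * norm x"

instantiation complex :: complex_normed_vector
begin
definition scaleC_complex :: "complex \<Rightarrow> complex \<Rightarrow> complex" where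
  "scaleC_complex a x = a * x"
instance
  by standard (auto simp: scaleC_complex_def algebra_simps norm_mult scaleR_conv_of_real)
end

definition csubspace :: "'a::complex_normed_vector set \<Rightarrow> bool" where
  "csubspace Y \<longleftrightarrow> 0 \<in> Y \<and> (\<forall>x\<in>Y. \<forall>y\<in>Y. x + y \<in> Y) \<and> (\<forall>c. \<forall>x\<in>Y. c *\<^sub>C x \<in> Y)"

text \<open>\<open>dim (X/Y) < \<infinity>\<close>: X = Y + span_C F for some finite F.\<close>
definition finite_codim :: "'a::complex_normed_vector set \<Rightarrow> bool" where
  "finite_codim Y \<longleftrightarrow> (\<exists>F. finite F \<and>
      (\<forall>x. \<exists>y\<in>Y. \<exists>c. x = y + (\<Sum>a\<in>F. c a *\<^sub>C a)))"

definition unit_ball :: "'a::complex_normed_vector set \<Rightarrow> 'a set" where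
  "unit_ball Y = Y \<inter> ball 0 1"

definition clinear_on :: "'a::complex_normed_vector set \<Rightarrow> ('a \<Rightarrow> complex) \<Rightarrow> bool" where
  "clinear_on Y L \<longleftrightarrow> (\<forall>x\<in>Y. \<forall>y\<in>Y. L (x + y) = L x + L y) \<and>
                        (\<forall>c. \<forall>x\<in>Y. L (c *\<^sub>C x) = c * L x)"

definition cbounded_on :: "'a::complex_normed_vector set \<Rightarrow> ('a \<Rightarrow> complex) \<Rightarrow> bool" where
  "cbounded_on Y L \<longleftrightarrow> (\<exists>K. \<forall>x\<in>Y. cmod (L x) \<le> K * norm x)"

text \<open>Dual space \<open>Y\<^sup>*\<close>: bounded complex-linear functionals on Y (values off Y irrelevant).\<close>
definition cdual :: "'a::complex_normed_vector set \<Rightarrow> ('a \<Rightarrow> complex) set" where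
  "cdual Y = {L. clinear_on Y L \<and> cbounded_on Y L}"

definition holomorphic_rel :: "'a::complex_normed_vector set \<Rightarrow> 'a set \<Rightarrow> ('a \<Rightarrow> complex) \<Rightarrow> bool" where
  "holomorphic_rel Y U g \<longleftrightarrow> (\<forall>x\<in>U. \<exists>L. L \<in> cdual Y \<and>
      ((\<lambda>h. cmod (g (x + h) - g x - L h) / norm h) \<longlongrightarrow> 0) (at 0 within Y))"

text \<open>Functions on \<open>B_Y\<close> are represented extensionally: zero outside \<open>B_Y\<close>.\<close>
definition restr :: "'a::complex_normed_vector set \<Rightarrow> ('a \<Rightarrow> complex) \<Rightarrow> 'a \<Rightarrow> complex" where
  "restr Y g = (\<lambda>x. if x \<in> unit_ball Y then g x else 0)"

definition Au :: "'a::complex_normed_vector set \<Rightarrow> ('a \<Rightarrow> complex) set" where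
  "Au Y = {g. (\<forall>x. x \<notin> unit_ball Y \<longrightarrow> g x = 0) \<and>
              bounded (g ` unit_ball Y) \<and>
              uniformly_continuous_on (unit_ball Y) g \<and>
              holomorphic_rel Y (unit_ball Y) g}"

definition spectrum_Au :: "'a::complex_normed_vector set \<Rightarrow> (('a \<Rightarrow> complex) \<Rightarrow> complex) set" where
  "spectrum_Au Y = {\<tau>.
      (\<forall>g\<in>Au Y. \<forall>h\<in>Au Y. \<tau> (\<lambda>x. g x + h x) = \<tau> g + \<tau> h) \<and>
      (\<forall>c. \<forall>g\<in>Au Y. \<tau> (\<lambda>x. c * g x) = c * \<tau> g) \<and>
      (\<forall>g\<in>Au Y. \<forall>h\<in>Au Y. \<tau> (\<lambda>x. g x * h x) = \<tau> g * \<tau> h) \<and>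
      (\<exists>g\<in>Au Y. \<tau> g \<noteq> 0)}"

definition M0 :: "'a::complex_normed_vector set \<Rightarrow> (('a \<Rightarrow> complex) \<Rightarrow> complex) set" where
  "M0 Y = {\<tau> \<in> spectrum_Au Y. \<forall>z \<in> cdual Y. \<tau> (restr Y z) = 0}"

text \<open>Nets are represented by (proper) filters; a net converges weakly to 0 iff every
  bounded complex-linear functional tends to 0 along it.\<close>
definition weak_cluster_0 :: "('a::complex_normed_vector \<Rightarrow> complex) \<Rightarrow> complex set" where
  "weak_cluster_0 f = {c. \<exists>F. F \<noteq> bot \<and> eventually (\<lambda>x. x \<in> ball 0 1) F \<and>
        (\<forall>\<phi> \<in> cdual UNIV. (\<phi> \<longlongrightarrow> 0) F) \<and> (f \<longlongrightarrow> c) F}"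

end

theory Submission
  imports Defs
begin


lemma scaleC_zero_left [simp]: "(0::complex) *\<^sub>C (x::'a::complex_normed_vector) = 0"
  by (metis scaleC_of_real of_real_0 scaleR_zero_left)

lemma scaleR_as_scaleC: "r *\<^sub>R (x::'a::complex_normed_vector) = (of_real r) *\<^sub>C x"
  by (simp add: scaleC_of_real)

lemma scaleC_minus1: "(-1::complex) *\<^sub>C (x::'a::complex_normed_vector) = - x"
  by (metis scaleC_of_real of_real_1 of_real_minus scaleR_minus1_left)

lemma scaleC_zero_right [simp]: "a *\<^sub>C (0::'a::complex_normed_vector) = 0"
  by (metis add_cancel_right_right scaleC_add_right add_0)

lemma scaleC_minus_right: "a *\<^sub>C (- x) = - (a *\<^sub>C (x::'a::complex_normed_vector))"
  by (metis scaleC_minus1 scaleC_scaleC mult.commute)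

lemma scaleC_minus_left: "(- a) *\<^sub>C x = - (a *\<^sub>C (x::'a::complex_normed_vector))"
  by (metis scaleC_minus1 scaleC_scaleC mult_minus1)

lemma scaleC_diff_right: "a *\<^sub>C (x - y) = a *\<^sub>C x - a *\<^sub>C (y::'a::complex_normed_vector)"
  by (metis diff_conv_add_uminus scaleC_add_right scaleC_minus_right)

lemma scaleC_diff_left: "(a - b) *\<^sub>C x = a *\<^sub>C x - b *\<^sub>C (x::'a::complex_normed_vector)"
  by (metis diff_conv_add_uminus scaleC_add_left scaleC_minus_left)

lemma csubspace_0: "csubspace Y \<Longrightarrow> 0 \<in> Y"
  by (simp add: csubspace_def)
lemma csubspace_add: "csubspace Y \<Longrightarrow> x \<in> Y \<Longrightarrow> y \<in> Y \<Longrightarrow> x + y \<in> Y"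
  by (simp add: csubspace_def)
lemma csubspace_scaleC: "csubspace Y \<Longrightarrow> x \<in> Y \<Longrightarrow> c *\<^sub>C x \<in> Y"
  by (simp add: csubspace_def)
lemma csubspace_minus: "csubspace Y \<Longrightarrow> x \<in> Y \<Longrightarrow> - x \<in> Y"
  by (metis csubspace_scaleC scaleC_minus1)
lemma csubspace_diff: "csubspace Y \<Longrightarrow> x \<in> Y \<Longrightarrow> y \<in> Y \<Longrightarrow> x - y \<in> Y"
  using csubspace_add[of Y x "-y"] csubspace_minus[of Y y] by simp
lemma csubspace_scaleR: "csubspace Y \<Longrightarrow> x \<in> Y \<Longrightarrow> c *\<^sub>R x \<in> Y"
  by (metis csubspace_scaleC scaleR_as_scaleC)

lemma clin_add: "clinear_on Y L \<Longrightarrow> x \<in> Y \<Longrightarrow> y \<in> Y \<Longrightarrow> L (x + y) = L x + L y"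
  by (simp add: clinear_on_def)
lemma clin_scaleC: "clinear_on Y L \<Longrightarrow> x \<in> Y \<Longrightarrow> L (c *\<^sub>C x) = c * L x"
  by (simp add: clinear_on_def)
lemma clin_0: "clinear_on Y L \<Longrightarrow> csubspace Y \<Longrightarrow> L 0 = 0"
  using clin_scaleC[of Y L 0 0] csubspace_0[of Y] by simp
lemma clin_minus: "clinear_on Y L \<Longrightarrow> x \<in> Y \<Longrightarrow> L (- x) = - L x"
  using clin_scaleC[of Y L x "-1"] by (simp add: scaleC_minus1)
lemma clin_diff: "clinear_on Y L \<Longrightarrow> csubspace Y \<Longrightarrow> x \<in> Y \<Longrightarrow> y \<in> Y \<Longrightarrow> L (x - y) = L x - L y"
  using clin_add[of Y L x "-y"] clin_minus[of Y L y] csubspace_minus[of Y y] by simp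
lemma clin_scaleR: "clinear_on Y L \<Longrightarrow> x \<in> Y \<Longrightarrow> L (r *\<^sub>R x) = of_real r * L x"
  using clin_scaleC[of Y L x "of_real r"] by (simp add: scaleR_as_scaleC)

lemma csubspace_UNIV: "csubspace (UNIV::'a::complex_normed_vector set)"
  by (simp add: csubspace_def)

lemma cdual_UNIV_D: "L \<in> cdual UNIV \<Longrightarrow> clinear_on UNIV L"
  by (simp add: cdual_def)

lemma clinear_on_subset: "clinear_on UNIV L \<Longrightarrow> clinear_on Y L"
  by (simp add: clinear_on_def)

lemma cdual_UNIV_sub: "L \<in> cdual UNIV \<Longrightarrow> L \<in> cdual Y"
  by (auto simp: cdual_def clinear_on_def cbounded_on_def)

lemma cdual_bound: "L \<in> cdual Y \<Longrightarrow> \<exists>K\<ge>0. \<forall>x\<in>Y. cmod (L x) \<le> K * norm x"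
proof -
  assume "L \<in> cdual Y"
  then obtain K where K: "\<forall>x\<in>Y. cmod (L x) \<le> K * norm x" by (auto simp: cdual_def cbounded_on_def)
  have "cmod (L x) \<le> max K 0 * norm x" if "x \<in> Y" for x
  proof -
    have "K * norm x \<le> max K 0 * norm x" by (rule mult_right_mono) auto
    then show ?thesis using K that by fastforce
  qed
  then have "\<forall>x\<in>Y. cmod (L x) \<le> max K 0 * norm x" by blast
  moreover have "max K 0 \<ge> 0" by simp
  ultimately show ?thesis by blast
qed

lemma cdual_UNIV_lipschitz:
  assumes "L \<in> cdual UNIV" shows "\<exists>K\<ge>0. \<forall>x y. cmod (L x - L y) \<le> K * norm (x - y)"
proof -
  obtain K where K: "K \<ge> 0" "\<forall>x. cmod (L x) \<le> K * norm x" using cdual_bound[OF assms] by blast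
  have eq: "L x - L y = L (x - y)" for x y
    using clin_diff[OF cdual_UNIV_D[OF assms] csubspace_UNIV] by simp
  have b: "\<forall>x y. cmod (L x - L y) \<le> K * norm (x - y)"
    unfolding eq using K(2) by simp
  show ?thesis by (rule exI[of _ K], rule conjI[OF K(1) b])
qed

lemma cdual_UNIV_cont: "L \<in> cdual UNIV \<Longrightarrow> continuous_on UNIV L"
proof -
  assume a: "L \<in> cdual UNIV"
  obtain K where K: "K \<ge> 0" "\<forall>x y. cmod (L x - L y) \<le> K * norm (x - y)"
    using cdual_UNIV_lipschitz[OF a] by blast
  show ?thesis
  proof (rule continuous_on_iff[THEN iffD2], intro ballI allI impI)
    fix x and e :: real assume "e > 0"
    show "\<exists>d>0. \<forall>x'\<in>UNIV. dist x' x < d \<longrightarrow> dist (L x') (L x) < e"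
    proof (intro exI[of _ "e / (K + 1)"] conjI ballI impI)
      show "e / (K + 1) > 0" using \<open>e>0\<close> K by simp
      fix x' assume "dist x' x < e / (K + 1)"
      then have "(K+1) * dist x' x < e" using K by (simp add: field_simps)
      moreover have "dist (L x') (L x) \<le> K * dist x' x" using K by (simp add: dist_norm)
      moreover have "K * dist x' x \<le> (K+1) * dist x' x" by (simp add: distrib_right)
      ultimately show "dist (L x') (L x) < e" by linarith
    qed
  qed
qed



lemma ker_set_eq: "{x. \<forall>\<psi>\<in>insert \<phi> \<Phi>. \<psi> x = 0} = {y \<in> {x. \<forall>\<psi>\<in>\<Phi>. \<psi> x = 0}. \<phi> y = 0}"
  by auto

lemma ker_csubspace:
  assumes "\<Phi> \<subseteq> cdual UNIV" shows "csubspace {x::'a::complex_normed_vector. \<forall>\<phi>\<in>\<Phi>. \<phi> x = 0}"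
  unfolding csubspace_def
proof (intro conjI ballI allI)
  show "0 \<in> {x. \<forall>\<phi>\<in>\<Phi>. \<phi> x = 0}"
    using assms clin_0[OF cdual_UNIV_D csubspace_UNIV] by auto
next
  fix x y assume "x \<in> {x. \<forall>\<phi>\<in>\<Phi>. \<phi> x = 0}" "y \<in> {x. \<forall>\<phi>\<in>\<Phi>. \<phi> x = 0}"
  then show "x + y \<in> {x. \<forall>\<phi>\<in>\<Phi>. \<phi> x = 0}"
    using assms by (auto simp: subset_iff clin_add[OF cdual_UNIV_D])
next
  fix c x assume "x \<in> {x. \<forall>\<phi>\<in>\<Phi>. \<phi> x = 0}"
  then show "c *\<^sub>C x \<in> {x. \<forall>\<phi>\<in>\<Phi>. \<phi> x = 0}"
    using assms by (auto simp: subset_iff clin_scaleC[OF cdual_UNIV_D])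
qed

lemma ker_closed:
  assumes "\<Phi> \<subseteq> cdual UNIV" shows "closed {x::'a::complex_normed_vector. \<forall>\<phi>\<in>\<Phi>. \<phi> x = 0}"
proof -
  have "{x::'a. \<forall>\<phi>\<in>\<Phi>. \<phi> x = 0} = (\<Inter>\<phi>\<in>\<Phi>. {x. \<phi> x = 0})" by auto
  moreover have "closed {x::'a. \<phi> x = 0}" if "\<phi> \<in> \<Phi>" for \<phi>
    using closed_Collect_eq[OF cdual_UNIV_cont continuous_on_const, of \<phi> 0] assms that by auto
  ultimately show ?thesis by (simp add: closed_INT)
qed

lemma sum_insert_coef:
  fixes y0 :: "'a::complex_normed_vector"
  assumes "finite F"
  shows "\<exists>c'. d *\<^sub>C y0 + (\<Sum>a\<in>F. c a *\<^sub>C a) = (\<Sum>a\<in>insert y0 F. c' a *\<^sub>C a)"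
proof (cases "y0 \<in> F")
  case True
  define c' where "c' = c(y0 := c y0 + d)"
  have "(\<Sum>a\<in>F. c a *\<^sub>C a) = c y0 *\<^sub>C y0 + (\<Sum>a\<in>F - {y0}. c a *\<^sub>C a)"
    using sum.remove[OF assms True] by simp
  moreover have "(\<Sum>a\<in>F. c' a *\<^sub>C a) = c' y0 *\<^sub>C y0 + (\<Sum>a\<in>F - {y0}. c' a *\<^sub>C a)"
    using sum.remove[OF assms True] by simp
  moreover have "(\<Sum>a\<in>F - {y0}. c' a *\<^sub>C a) = (\<Sum>a\<in>F - {y0}. c a *\<^sub>C a)"
    by (rule sum.cong) (auto simp: c'_def)
  moreover have "c' y0 *\<^sub>C y0 = c y0 *\<^sub>C y0 + d *\<^sub>C y0"
    by (simp add: c'_def scaleC_add_left)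
  ultimately have "d *\<^sub>C y0 + (\<Sum>a\<in>F. c a *\<^sub>C a) = (\<Sum>a\<in>F. c' a *\<^sub>C a)"
    by (simp add: algebra_simps)
  then show ?thesis using True by (intro exI[of _ c']) (simp add: insert_absorb)
next
  case False
  define c' where "c' = c(y0 := d)"
  have "(\<Sum>a\<in>F. c' a *\<^sub>C a) = (\<Sum>a\<in>F. c a *\<^sub>C a)"
    by (rule sum.cong) (use False in \<open>auto simp: c'_def\<close>)
  then have "d *\<^sub>C y0 + (\<Sum>a\<in>F. c a *\<^sub>C a) = (\<Sum>a\<in>insert y0 F. c' a *\<^sub>C a)"
    using sum.insert[OF assms False, of "\<lambda>a. c' a *\<^sub>C a"] by (simp add: c'_def)
  then show ?thesis by blast
qed

lemma finite_codim_step: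
  fixes Y :: "'a::complex_normed_vector set"
  assumes Y: "csubspace Y" and \<phi>: "clinear_on UNIV \<phi>" and fc: "finite_codim Y"
  shows "finite_codim {y \<in> Y. \<phi> y = 0}"
proof (cases "\<forall>y\<in>Y. \<phi> y = 0")
  case True
  then have "{y \<in> Y. \<phi> y = 0} = Y" by auto
  then show ?thesis using fc by simp
next
  case False
  then obtain y1 where y1: "y1 \<in> Y" "\<phi> y1 \<noteq> 0" by auto
  define y0 where "y0 = (1 / \<phi> y1) *\<^sub>C y1"
  have y0: "y0 \<in> Y" unfolding y0_def using Y y1(1) by (rule csubspace_scaleC)
  have "\<phi> y0 = 1" unfolding y0_def using clin_scaleC[OF \<phi>, of y1 "1 / \<phi> y1"] y1 by simp
  obtain F where F: "finite F" "\<forall>x. \<exists>y\<in>Y. \<exists>c. x = y + (\<Sum>a\<in>F. c a *\<^sub>C a)"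
    using fc unfolding finite_codim_def by blast
  show ?thesis unfolding finite_codim_def
  proof (intro exI[of _ "insert y0 F"] conjI allI)
    show "finite (insert y0 F)" using F by simp
    fix x
    obtain y c where yc: "y \<in> Y" "x = y + (\<Sum>a\<in>F. c a *\<^sub>C a)" using F by blast
    define y' where "y' = y - \<phi> y *\<^sub>C y0"
    have y'Y: "y' \<in> Y" unfolding y'_def using Y yc(1) y0 by (simp add: csubspace_diff csubspace_scaleC)
    have "\<phi> y' = \<phi> y - \<phi> y * \<phi> y0"
      unfolding y'_def using clin_diff[OF \<phi> csubspace_UNIV] clin_scaleC[OF \<phi>] by simp
    then have "\<phi> y' = 0" using \<open>\<phi> y0 = 1\<close> by simp
    obtain c' where c': "\<phi> y *\<^sub>C y0 + (\<Sum>a\<in>F. c a *\<^sub>C a) = (\<Sum>a\<in>insert y0 F. c' a *\<^sub>C a)"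
      using sum_insert_coef[OF F(1)] by blast
    have "x = y' + (\<phi> y *\<^sub>C y0 + (\<Sum>a\<in>F. c a *\<^sub>C a))"
      unfolding y'_def yc(2) by (simp add: algebra_simps)
    then have "x = y' + (\<Sum>a\<in>insert y0 F. c' a *\<^sub>C a)" using c' by simp
    then show "\<exists>y\<in>{y \<in> Y. \<phi> y = 0}. \<exists>c. x = y + (\<Sum>a\<in>insert y0 F. c a *\<^sub>C a)"
      using y'Y \<open>\<phi> y' = 0\<close> by blast
  qed
qed

lemma finite_codim_UNIV: "finite_codim (UNIV::'a::complex_normed_vector set)"
  unfolding finite_codim_def by (intro exI[of _ "{}"]) simp

lemma finite_codim_ker:
  assumes "finite \<Phi>" "\<Phi> \<subseteq> cdual UNIV"
  shows "finite_codim {x::'a::complex_normed_vector. \<forall>\<phi>\<in>\<Phi>. \<phi> x = 0}"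
  using assms
proof (induction \<Phi> rule: finite_induct)
  case empty
  then show ?case using finite_codim_UNIV by simp
next
  case (insert \<phi> \<Phi>)
  then have "finite_codim {x::'a. \<forall>\<phi>\<in>\<Phi>. \<phi> x = 0}" by simp
  then show ?case unfolding ker_set_eq
    using finite_codim_step[OF ker_csubspace cdual_UNIV_D] insert.prems by auto
qed



lemma unit_ball_sub: "x \<in> unit_ball Y \<Longrightarrow> x \<in> Y" "x \<in> unit_ball Y \<Longrightarrow> norm x < 1"
  by (auto simp: unit_ball_def)

lemma eventually_ball_within:
  fixes x :: "'a::complex_normed_vector"
  assumes Y: "csubspace Y" and x: "x \<in> unit_ball Y"
  shows "eventually (\<lambda>h. x + h \<in> unit_ball Y) (at 0 within Y)"
  unfolding eventually_at
proof (intro exI[of _ "1 - norm x"] conjI ballI impI)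
  show "1 - norm x > 0" using unit_ball_sub(2)[OF x] by simp
  fix h assume h: "h \<in> Y" "h \<noteq> 0 \<and> dist h 0 < 1 - norm x"
  have "x + h \<in> Y" using csubspace_add[OF Y unit_ball_sub(1)[OF x] h(1)] .
  moreover have "norm (x + h) < 1"
    using norm_triangle_ineq[of x h] h(2) by simp
  ultimately show "x + h \<in> unit_ball Y" by (simp add: unit_ball_def)
qed

lemma eventually_nz_within: "eventually (\<lambda>h. h \<noteq> 0) (at (0::'a::real_normed_vector) within Y)"
  by (simp add: eventually_at_filter)

lemma cdual_zero: "csubspace Y \<Longrightarrow> (\<lambda>_. 0) \<in> cdual Y"
  unfolding cdual_def clinear_on_def cbounded_on_def
  by (simp, rule exI[of _ 0], simp)

lemma Au_const:
  fixes Y :: "'a::complex_normed_vector set"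
  assumes Y: "csubspace Y" shows "restr Y (\<lambda>_. k) \<in> Au Y"
  unfolding Au_def mem_Collect_eq
proof (intro conjI allI impI)
  show "restr Y (\<lambda>_. k) x = 0" if "x \<notin> unit_ball Y" for x using that by (simp add: restr_def)
  have "restr Y (\<lambda>_. k) ` unit_ball Y \<subseteq> {k}" by (auto simp: restr_def)
  then show "bounded (restr Y (\<lambda>_. k) ` unit_ball Y)" by (meson bounded_subset finite_imp_bounded finite.intros)
  show "uniformly_continuous_on (unit_ball Y) (restr Y (\<lambda>_. k))"
    unfolding uniformly_continuous_on_def by (auto simp: restr_def intro: exI[of _ 1])
  show "holomorphic_rel Y (unit_ball Y) (restr Y (\<lambda>_. k))"
    unfolding holomorphic_rel_def
  proof (intro ballI exI[of _ "\<lambda>_. 0"] conjI)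
    fix x assume x: "x \<in> unit_ball Y"
    show "(\<lambda>_. 0) \<in> cdual Y" using cdual_zero[OF Y] .
    have "eventually (\<lambda>h. 0 = cmod (restr Y (\<lambda>_. k) (x + h) - restr Y (\<lambda>_. k) x - 0) / norm h) (at 0 within Y)"
      using eventually_ball_within[OF Y x] by eventually_elim (use x in \<open>simp add: restr_def\<close>)
    then show "((\<lambda>h. cmod (restr Y (\<lambda>_. k) (x + h) - restr Y (\<lambda>_. k) x - 0) / norm h) \<longlongrightarrow> 0) (at 0 within Y)"
      by (rule Lim_transform_eventually[OF tendsto_const])
  qed
qed

lemma uc_cong:
  fixes f g :: "'a::metric_space \<Rightarrow> 'b::metric_space"
  assumes "uniformly_continuous_on S f" "\<And>x. x \<in> S \<Longrightarrow> f x = g x"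
  shows "uniformly_continuous_on S g"
  unfolding uniformly_continuous_on_def
proof (intro allI impI)
  fix e :: real assume "e > 0"
  then obtain d where "d > 0" and d: "\<forall>x\<in>S. \<forall>x'\<in>S. dist x' x < d \<longrightarrow> dist (f x') (f x) < e"
    using assms(1) unfolding uniformly_continuous_on_def by blast
  then show "\<exists>d>0. \<forall>x\<in>S. \<forall>x'\<in>S. dist x' x < d \<longrightarrow> dist (g x') (g x) < e"
  proof (intro exI[of _ d] conjI ballI impI)
    fix x x' assume "x \<in> S" "x' \<in> S" "dist x' x < d"
    then have "dist (f x') (f x) < e" using d by blast
    then show "dist (g x') (g x) < e" using assms(2) \<open>x \<in> S\<close> \<open>x' \<in> S\<close> by simp
  qed (rule \<open>d > 0\<close>)
qed

lemma Au_D: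
  assumes "g \<in> Au Y"
  shows "\<And>x. x \<notin> unit_ball Y \<Longrightarrow> g x = 0" "bounded (g ` unit_ball Y)"
    "uniformly_continuous_on (unit_ball Y) g" "holomorphic_rel Y (unit_ball Y) g"
  using assms unfolding Au_def mem_Collect_eq by blast+

lemma holo_D:
  assumes "holomorphic_rel Y U g" "x \<in> U"
  obtains L where "L \<in> cdual Y" "((\<lambda>h. cmod (g (x + h) - g x - L h) / norm h) \<longlongrightarrow> 0) (at 0 within Y)"
  using assms unfolding holomorphic_rel_def by blast

lemma uc_subset:
  fixes f :: "'a::metric_space \<Rightarrow> 'b::metric_space"
  assumes "uniformly_continuous_on S f" "T \<subseteq> S"
  shows "uniformly_continuous_on T f"
  unfolding uniformly_continuous_on_def
proof (intro allI impI)
  fix e :: real assume "e > 0"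
  then obtain d where "d > 0" and d: "\<forall>x\<in>S. \<forall>x'\<in>S. dist x' x < d \<longrightarrow> dist (f x') (f x) < e"
    using assms(1) unfolding uniformly_continuous_on_def by blast
  show "\<exists>d>0. \<forall>x\<in>T. \<forall>x'\<in>T. dist x' x < d \<longrightarrow> dist (f x') (f x) < e"
    using \<open>d > 0\<close> d assms(2) by blast
qed

lemma restr_Au:
  fixes f :: "'a::complex_normed_vector \<Rightarrow> complex"
  assumes f: "restr UNIV f \<in> Au UNIV" and Y: "csubspace Y"
  shows "restr Y f \<in> Au Y"
  unfolding Au_def mem_Collect_eq
proof (intro conjI allI impI)
  have sub: "unit_ball Y \<subseteq> unit_ball UNIV" by (auto simp: unit_ball_def)
  have eq: "restr Y f x = restr UNIV f x" if "x \<in> unit_ball Y" for x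
    using that sub by (auto simp: restr_def)
  show "restr Y f x = 0" if "x \<notin> unit_ball Y" for x using that by (simp add: restr_def)
  have "restr Y f ` unit_ball Y = restr UNIV f ` unit_ball Y" by (rule image_cong) (simp_all add: eq)
  also have "\<dots> \<subseteq> restr UNIV f ` unit_ball UNIV" by (rule image_mono[OF sub])
  finally have "restr Y f ` unit_ball Y \<subseteq> restr UNIV f ` unit_ball UNIV" .
  moreover have "bounded (restr UNIV f ` unit_ball UNIV)" using Au_D(2)[OF f] .
  ultimately show "bounded (restr Y f ` unit_ball Y)" by (rule bounded_subset[rotated])
  have "uniformly_continuous_on (unit_ball Y) (restr UNIV f)"
    using uc_subset[OF Au_D(3)[OF f] sub] .
  then show "uniformly_continuous_on (unit_ball Y) (restr Y f)"
    by (rule uc_cong) (simp add: eq)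
  show "holomorphic_rel Y (unit_ball Y) (restr Y f)"
    unfolding holomorphic_rel_def
  proof
    fix x assume x: "x \<in> unit_ball Y"
    then have xU: "x \<in> unit_ball UNIV" using sub by auto
    obtain L where L: "L \<in> cdual UNIV"
      "((\<lambda>h. cmod (restr UNIV f (x + h) - restr UNIV f x - L h) / norm h) \<longlongrightarrow> 0) (at 0 within UNIV)"
      using holo_D[OF Au_D(4)[OF f] xU] by blast
    have "((\<lambda>h. cmod (restr UNIV f (x + h) - restr UNIV f x - L h) / norm h) \<longlongrightarrow> 0) (at 0 within Y)"
      by (rule tendsto_within_subset[OF L(2)]) simp
    moreover have "eventually (\<lambda>h. cmod (restr UNIV f (x + h) - restr UNIV f x - L h) / norm h
        = cmod (restr Y f (x + h) - restr Y f x - L h) / norm h) (at 0 within Y)"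
      using eventually_ball_within[OF Y x] by eventually_elim (use x eq in simp)
    ultimately have "((\<lambda>h. cmod (restr Y f (x + h) - restr Y f x - L h) / norm h) \<longlongrightarrow> 0) (at 0 within Y)"
      by (rule Lim_transform_eventually)
    then show "\<exists>L. L \<in> cdual Y \<and> ((\<lambda>h. cmod (restr Y f (x + h) - restr Y f x - L h) / norm h) \<longlongrightarrow> 0) (at 0 within Y)"
      using cdual_UNIV_sub[OF L(1)] by blast
  qed
qed

lemma cdual_add: "L1 \<in> cdual Y \<Longrightarrow> L2 \<in> cdual Y \<Longrightarrow> (\<lambda>h. L1 h + L2 h) \<in> cdual Y"
proof -
  assume a: "L1 \<in> cdual Y" "L2 \<in> cdual Y"
  obtain K1 K2 where K: "\<forall>x\<in>Y. cmod (L1 x) \<le> K1 * norm x" "\<forall>x\<in>Y. cmod (L2 x) \<le> K2 * norm x"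
    using a unfolding cdual_def cbounded_on_def by blast
  have "cmod (L1 x + L2 x) \<le> (K1 + K2) * norm x" if "x \<in> Y" for x
  proof -
    have "cmod (L1 x + L2 x) \<le> cmod (L1 x) + cmod (L2 x)" by (rule norm_triangle_ineq)
    also have "\<dots> \<le> K1 * norm x + K2 * norm x" using K that by (intro add_mono) auto
    also have "\<dots> = (K1 + K2) * norm x" by (simp add: distrib_right)
    finally show ?thesis .
  qed
  then have "cbounded_on Y (\<lambda>h. L1 h + L2 h)" unfolding cbounded_on_def by blast
  moreover have l: "clinear_on Y L1" "clinear_on Y L2" using a unfolding cdual_def by blast+
  have "clinear_on Y (\<lambda>h. L1 h + L2 h)" unfolding clinear_on_def
  proof (intro conjI ballI allI)
    fix x y assume "x \<in> Y" "y \<in> Y"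
    then show "L1 (x + y) + L2 (x + y) = L1 x + L2 x + (L1 y + L2 y)"
      using clin_add[OF l(1)] clin_add[OF l(2)] by simp
  next
    fix c x assume "x \<in> Y"
    then show "L1 (c *\<^sub>C x) + L2 (c *\<^sub>C x) = c * (L1 x + L2 x)"
      using clin_scaleC[OF l(1)] clin_scaleC[OF l(2)] by (simp add: distrib_left)
  qed
  ultimately show ?thesis unfolding cdual_def by blast
qed

lemma Au_add:
  fixes Y :: "'a::complex_normed_vector set"
  assumes Y: "csubspace Y" and g: "g \<in> Au Y" and k: "k \<in> Au Y"
  shows "(\<lambda>x. g x + k x) \<in> Au Y"
  unfolding Au_def mem_Collect_eq
proof (intro conjI allI impI)
  show "g x + k x = 0" if "x \<notin> unit_ball Y" for x using that Au_D(1)[OF g] Au_D(1)[OF k] by simp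
  have "bounded (g ` unit_ball Y)" "bounded (k ` unit_ball Y)" using Au_D(2)[OF g] Au_D(2)[OF k] .
  then obtain B1 B2 where B: "\<forall>y\<in>unit_ball Y. norm (g y) \<le> B1" "\<forall>y\<in>unit_ball Y. norm (k y) \<le> B2"
    unfolding bounded_iff by blast
  have "norm (g y + k y) \<le> B1 + B2" if "y \<in> unit_ball Y" for y
    using norm_triangle_ineq[of "g y" "k y"] B that by fastforce
  then show "bounded ((\<lambda>x. g x + k x) ` unit_ball Y)" unfolding bounded_iff by blast
  show "uniformly_continuous_on (unit_ball Y) (\<lambda>x. g x + k x)"
    using Au_D(3)[OF g] Au_D(3)[OF k] by (rule uniformly_continuous_on_add)
  show "holomorphic_rel Y (unit_ball Y) (\<lambda>x. g x + k x)"
    unfolding holomorphic_rel_def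
  proof
    fix x assume x: "x \<in> unit_ball Y"
    obtain L1 where L1: "L1 \<in> cdual Y"
      "((\<lambda>h. cmod (g (x + h) - g x - L1 h) / norm h) \<longlongrightarrow> 0) (at 0 within Y)"
      using holo_D[OF Au_D(4)[OF g] x] by blast
    obtain L2 where L2: "L2 \<in> cdual Y"
      "((\<lambda>h. cmod (k (x + h) - k x - L2 h) / norm h) \<longlongrightarrow> 0) (at 0 within Y)"
      using holo_D[OF Au_D(4)[OF k] x] by blast
    have "((\<lambda>h. cmod (g (x + h) + k (x + h) - (g x + k x) - (L1 h + L2 h)) / norm h) \<longlongrightarrow> 0) (at 0 within Y)"
    proof (rule tendsto_sandwich[OF _ _ tendsto_const])
      show "((\<lambda>h. cmod (g (x + h) - g x - L1 h) / norm h + cmod (k (x + h) - k x - L2 h) / norm h) \<longlongrightarrow> 0) (at 0 within Y)"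
        using tendsto_add[OF L1(2) L2(2)] by simp
      show "\<forall>\<^sub>F h in at 0 within Y. 0 \<le> cmod (g (x + h) + k (x + h) - (g x + k x) - (L1 h + L2 h)) / norm h"
        by simp
      have "cmod (g (x + h) + k (x + h) - (g x + k x) - (L1 h + L2 h)) / norm h
          \<le> cmod (g (x + h) - g x - L1 h) / norm h + cmod (k (x + h) - k x - L2 h) / norm h" for h
      proof -
        have "cmod (g (x + h) + k (x + h) - (g x + k x) - (L1 h + L2 h))
            \<le> cmod (g (x + h) - g x - L1 h) + cmod (k (x + h) - k x - L2 h)"
          using norm_triangle_ineq[of "g (x + h) - g x - L1 h" "k (x + h) - k x - L2 h"]
          by (simp add: algebra_simps)
        then show ?thesis by (simp add: add_divide_distrib[symmetric] divide_right_mono)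
      qed
      then show "\<forall>\<^sub>F h in at 0 within Y. cmod (g (x + h) + k (x + h) - (g x + k x) - (L1 h + L2 h)) / norm h
          \<le> cmod (g (x + h) - g x - L1 h) / norm h + cmod (k (x + h) - k x - L2 h) / norm h"
        by simp
    qed
    then show "\<exists>L. L \<in> cdual Y \<and> ((\<lambda>h. cmod (g (x + h) + k (x + h) - (g x + k x) - L h) / norm h) \<longlongrightarrow> 0) (at 0 within Y)"
      using cdual_add[OF L1(1) L2(1)] by blast
  qed
qed



lemma spec_D:
  assumes "\<tau> \<in> spectrum_Au Y"
  shows "\<And>g h. g \<in> Au Y \<Longrightarrow> h \<in> Au Y \<Longrightarrow> \<tau> (\<lambda>x. g x + h x) = \<tau> g + \<tau> h"
    "\<And>c g. g \<in> Au Y \<Longrightarrow> \<tau> (\<lambda>x. c * g x) = c * \<tau> g"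
    "\<And>g h. g \<in> Au Y \<Longrightarrow> h \<in> Au Y \<Longrightarrow> \<tau> (\<lambda>x. g x * h x) = \<tau> g * \<tau> h"
    "\<exists>g\<in>Au Y. \<tau> g \<noteq> 0"
  using assms unfolding spectrum_Au_def mem_Collect_eq by blast+

lemma tau_one:
  assumes Y: "csubspace Y" and t: "\<tau> \<in> spectrum_Au Y"
  shows "\<tau> (restr Y (\<lambda>_. 1)) = 1"
proof -
  obtain g where g: "g \<in> Au Y" "\<tau> g \<noteq> 0" using spec_D(4)[OF t] by blast
  have "(\<lambda>x. restr Y (\<lambda>_. 1) x * g x) = g"
    using Au_D(1)[OF g(1)] by (auto simp: restr_def)
  moreover have "\<tau> (\<lambda>x. restr Y (\<lambda>_. 1) x * g x) = \<tau> (restr Y (\<lambda>_. 1)) * \<tau> g"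
    by (rule spec_D(3)[OF t Au_const[OF Y] g(1)])
  ultimately have "\<tau> g = \<tau> (restr Y (\<lambda>_. 1)) * \<tau> g" by simp
  then have "(\<tau> (restr Y (\<lambda>_. 1)) - 1) * \<tau> g = 0" by (simp add: algebra_simps)
  then show ?thesis using g(2) by simp
qed

lemma cont_within:
  fixes g :: "'a::complex_normed_vector \<Rightarrow> complex"
  assumes Y: "csubspace Y" and g: "g \<in> Au Y" and x: "x \<in> unit_ball Y"
  shows "((\<lambda>h. g (x + h)) \<longlongrightarrow> g x) (at 0 within Y)"
proof (rule tendstoI)
  fix e :: real assume "e > 0"
  obtain d where "d > 0" and d: "\<forall>x\<in>unit_ball Y. \<forall>x'\<in>unit_ball Y. dist x' x < d \<longrightarrow> dist (g x') (g x) < e"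
    using Au_D(3)[OF g] \<open>e > 0\<close> unfolding uniformly_continuous_on_def by blast
  have "eventually (\<lambda>h. norm h < d) (at 0 within Y)"
    unfolding eventually_at using \<open>d > 0\<close> by (intro exI[of _ d]) auto
  then show "eventually (\<lambda>h. dist (g (x + h)) (g x) < e) (at 0 within Y)"
    using eventually_ball_within[OF Y x]
  proof eventually_elim
    case (elim h)
    then show ?case using d x by (simp add: dist_norm)
  qed
qed

lemma inv_est:
  fixes a b l :: complex
  assumes e: "e > 0" "e \<le> cmod a" "e \<le> cmod b"
  shows "cmod (1 / b - 1 / a + l / a^2) \<le> cmod (b - a - l) / e^2 + cmod l * cmod (b - a) / e^3"
proof -
  have a: "a \<noteq> 0" and b: "b \<noteq> 0" using e by auto
  have pa: "cmod a > 0" "cmod b > 0" using e by auto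
  define D where "D = b - a - l"
  define X where "X = - D / (a * b)"
  define Z where "Z = l * (b - a) / (a^2 * b)"
  have eq: "1 / b - 1 / a + l / a^2 = X + Z"
    using a b unfolding X_def Z_def D_def by (simp add: field_simps power2_eq_square)
  have ab: "e^2 \<le> cmod a * cmod b" using e by (simp add: power2_eq_square mult_mono)
  have aab: "e^3 \<le> cmod a ^ 2 * cmod b"
  proof -
    have "e^2 \<le> cmod a ^ 2" using e by (simp add: power_mono)
    then have "e^2 * e \<le> cmod a ^ 2 * cmod b" using e by (intro mult_mono) auto
    then show ?thesis by (simp add: power3_eq_cube power2_eq_square mult.assoc)
  qed
  have "cmod (1 / b - 1 / a + l / a^2) \<le> cmod X + cmod Z"
    unfolding eq by (rule norm_triangle_ineq)
  also have "cmod X = cmod D / (cmod a * cmod b)"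
    unfolding X_def by (simp add: norm_divide norm_mult)
  also have "\<dots> \<le> cmod D / e^2"
    using ab e pa by (intro divide_left_mono) (auto intro!: mult_pos_pos)
  also have "cmod Z = cmod l * cmod (b - a) / (cmod a ^ 2 * cmod b)"
    unfolding Z_def by (simp add: norm_divide norm_mult norm_power)
  also have "\<dots> \<le> cmod l * cmod (b - a) / e^3"
    using aab e pa by (intro divide_left_mono) (auto intro!: mult_pos_pos)
  finally show ?thesis unfolding D_def by simp
qed



lemma cdual_scale:
  assumes L: "L \<in> cdual Y" shows "(\<lambda>h. k * L h) \<in> cdual Y"
proof -
  have l: "clinear_on Y L" using L unfolding cdual_def by blast
  obtain K where K: "\<forall>x\<in>Y. cmod (L x) \<le> K * norm x" using L unfolding cdual_def cbounded_on_def by blast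
  have "cmod (k * L x) \<le> (cmod k * K) * norm x" if "x \<in> Y" for x
  proof -
    have "cmod (k * L x) = cmod k * cmod (L x)" by (simp add: norm_mult)
    also have "\<dots> \<le> cmod k * (K * norm x)" using K that by (intro mult_left_mono) auto
    finally show ?thesis by (simp add: mult.assoc)
  qed
  then have "cbounded_on Y (\<lambda>h. k * L h)" unfolding cbounded_on_def by blast
  moreover have "clinear_on Y (\<lambda>h. k * L h)" unfolding clinear_on_def
  proof (intro conjI ballI allI)
    fix x y assume "x \<in> Y" "y \<in> Y"
    then show "k * L (x + y) = k * L x + k * L y" using clin_add[OF l] by (simp add: distrib_left)
  next
    fix c x assume "x \<in> Y"
    then show "k * L (c *\<^sub>C x) = c * (k * L x)" using clin_scaleC[OF l] by simp
  qed
  ultimately show ?thesis unfolding cdual_def by blast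
qed

lemma Au_inverse:
  fixes g :: "'a::complex_normed_vector \<Rightarrow> complex"
  assumes Y: "csubspace Y" and g: "g \<in> Au Y" and e: "e > 0" and ge: "\<forall>y\<in>unit_ball Y. e \<le> cmod (g y)"
  shows "(\<lambda>x. if x \<in> unit_ball Y then 1 / g x else 0) \<in> Au Y"
    (is "?v \<in> _")
  unfolding Au_def mem_Collect_eq
proof (intro conjI allI impI)
  show "?v x = 0" if "x \<notin> unit_ball Y" for x using that by simp
  have nz: "g y \<noteq> 0" if "y \<in> unit_ball Y" for y using ge that e by fastforce
  have "cmod (?v y) \<le> 1 / e" if "y \<in> unit_ball Y" for y
  proof -
    have "cmod (?v y) = 1 / cmod (g y)" using that by (simp add: norm_divide)
    also have "\<dots> \<le> 1 / e"
    proof -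
      have ey: "e \<le> cmod (g y)" using ge that by blast
      then have "0 < cmod (g y)" using e by linarith
      then show ?thesis using ey e by (intro divide_left_mono) auto
    qed
    finally show ?thesis .
  qed
  then show "bounded (?v ` unit_ball Y)" unfolding bounded_iff by blast
  show "uniformly_continuous_on (unit_ball Y) ?v"
    unfolding uniformly_continuous_on_def
  proof (intro allI impI)
    fix r :: real assume "r > 0"
    then have "r * e^2 > 0" using e by simp
    then obtain d where "d > 0" and d: "\<forall>x\<in>unit_ball Y. \<forall>x'\<in>unit_ball Y. dist x' x < d \<longrightarrow> dist (g x') (g x) < r * e^2"
      using Au_D(3)[OF g] unfolding uniformly_continuous_on_def by blast
    show "\<exists>d>0. \<forall>x\<in>unit_ball Y. \<forall>x'\<in>unit_ball Y. dist x' x < d \<longrightarrow> dist (?v x') (?v x) < r"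
    proof (intro exI[of _ d] conjI ballI impI)
      show "d > 0" by fact
      fix x x' assume x: "x \<in> unit_ball Y" and x': "x' \<in> unit_ball Y" and dx: "dist x' x < d"
      have "1 / g x' - 1 / g x = (g x - g x') / (g x' * g x)"
        using nz x x' by (simp add: field_simps)
      then have "dist (?v x') (?v x) = cmod (g x - g x') / (cmod (g x') * cmod (g x))"
        using x x' by (simp add: dist_norm norm_divide norm_mult)
      also have "\<dots> \<le> cmod (g x - g x') / e^2"
      proof (rule divide_left_mono)
        show "e^2 \<le> cmod (g x') * cmod (g x)"
          using ge x x' e by (simp add: power2_eq_square mult_mono)
        show "0 \<le> cmod (g x - g x')" by simp
        show "0 < cmod (g x') * cmod (g x) * e^2" using nz x x' e by simp
      qed
      also have "\<dots> < r"
      proof -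
        have "cmod (g x - g x') < r * e^2" using d x x' dx by (simp add: dist_norm norm_minus_commute)
        then show ?thesis using e by (simp add: divide_less_eq)
      qed
      finally show "dist (?v x') (?v x) < r" .
    qed
  qed
  show "holomorphic_rel Y (unit_ball Y) ?v"
    unfolding holomorphic_rel_def
  proof
    fix x assume x: "x \<in> unit_ball Y"
    obtain L where L: "L \<in> cdual Y" "((\<lambda>h. cmod (g (x + h) - g x - L h) / norm h) \<longlongrightarrow> 0) (at 0 within Y)"
      using holo_D[OF Au_D(4)[OF g] x] by blast
    obtain K where K: "K \<ge> 0" "\<forall>h\<in>Y. cmod (L h) \<le> K * norm h" using cdual_bound[OF L(1)] by blast
    define A where "A = g x"
    have eA: "e \<le> cmod A" using ge x unfolding A_def by blast
    define L' where "L' = (\<lambda>h. (- 1 / A^2) * L h)"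
    have L': "L' \<in> cdual Y" unfolding L'_def by (rule cdual_scale[OF L(1)])
    have lim1: "((\<lambda>h. (cmod (g (x + h) - g x - L h) / norm h) / e^2 + K * cmod (g (x + h) - g x) / e^3) \<longlongrightarrow> 0) (at 0 within Y)"
    proof -
      have "((\<lambda>h. (cmod (g (x + h) - g x - L h) / norm h) / e^2) \<longlongrightarrow> 0 / e^2) (at 0 within Y)"
        by (intro tendsto_divide L(2) tendsto_const) (use e in simp)
      moreover have "((\<lambda>h. g (x + h) - g x) \<longlongrightarrow> g x - g x) (at 0 within Y)"
        by (intro tendsto_diff cont_within[OF Y g x] tendsto_const)
      then have "((\<lambda>h. cmod (g (x + h) - g x)) \<longlongrightarrow> 0) (at 0 within Y)"
        using tendsto_norm by fastforce
      then have "((\<lambda>h. K * cmod (g (x + h) - g x) / e^3) \<longlongrightarrow> K * 0 / e^3) (at 0 within Y)"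
        by (intro tendsto_divide tendsto_mult tendsto_const) (use e in auto)
      ultimately show ?thesis using tendsto_add by fastforce
    qed
    have "((\<lambda>h. cmod (?v (x + h) - ?v x - L' h) / norm h) \<longlongrightarrow> 0) (at 0 within Y)"
    proof (rule tendsto_sandwich[OF _ _ tendsto_const lim1])
      show "\<forall>\<^sub>F h in at 0 within Y. 0 \<le> cmod (?v (x + h) - ?v x - L' h) / norm h" by simp
      show "\<forall>\<^sub>F h in at 0 within Y. cmod (?v (x + h) - ?v x - L' h) / norm h
          \<le> (cmod (g (x + h) - g x - L h) / norm h) / e^2 + K * cmod (g (x + h) - g x) / e^3"
        using eventually_ball_within[OF Y x] eventually_nz_within[of Y]
      proof eventually_elim
        case (elim h)
        have "(x + h) - x \<in> Y"
          using csubspace_diff[OF Y unit_ball_sub(1)[OF elim(1)] unit_ball_sub(1)[OF x]] .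
        then have hY: "h \<in> Y" by simp
        have nh: "norm h > 0" using elim by simp
        define B where "B = g (x + h)"
        have eB: "e \<le> cmod B" using ge elim unfolding B_def by blast
        have "?v (x + h) - ?v x - L' h = 1 / B - 1 / A + L h / A^2"
          using elim x unfolding A_def B_def L'_def by simp
        then have "cmod (?v (x + h) - ?v x - L' h) \<le> cmod (B - A - L h) / e^2 + cmod (L h) * cmod (B - A) / e^3"
          using inv_est[OF e eA eB] by simp
        also have "\<dots> \<le> cmod (B - A - L h) / e^2 + (K * norm h) * cmod (B - A) / e^3"
          using K hY e by (intro add_left_mono divide_right_mono mult_right_mono) auto
        finally have "cmod (?v (x + h) - ?v x - L' h) / norm h
            \<le> (cmod (B - A - L h) / e^2 + (K * norm h) * cmod (B - A) / e^3) / norm h"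
          using nh by (intro divide_right_mono) auto
        also have "\<dots> = (cmod (B - A - L h) / norm h) / e^2 + K * cmod (B - A) / e^3"
          using nh by (simp add: field_simps)
        finally show ?case unfolding A_def B_def .
      qed
    qed
    then show "\<exists>L. L \<in> cdual Y \<and> ((\<lambda>h. cmod (?v (x + h) - ?v x - L h) / norm h) \<longlongrightarrow> 0) (at 0 within Y)"
      using L' by blast
  qed
qed



lemma spectrum_approx:
  fixes g :: "'a::complex_normed_vector \<Rightarrow> complex"
  assumes Y: "csubspace Y" and t: "\<tau> \<in> spectrum_Au Y" and g: "g \<in> Au Y" and e: "e > 0"
  shows "\<exists>y\<in>unit_ball Y. cmod (g y - \<tau> g) < e"
proof (rule ccontr)
  assume "\<not> ?thesis"
  then have ge: "\<forall>y\<in>unit_ball Y. e \<le> cmod (g y - \<tau> g)" by (simp add: not_less)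
  define one where "one = restr Y (\<lambda>_. 1::complex)"
  define m where "m = restr Y (\<lambda>_. - \<tau> g)"
  define u where "u = (\<lambda>x. g x + m x)"
  have one: "one \<in> Au Y" unfolding one_def by (rule Au_const[OF Y])
  have mA: "m \<in> Au Y" unfolding m_def by (rule Au_const[OF Y])
  have uA: "u \<in> Au Y" unfolding u_def by (rule Au_add[OF Y g mA])
  have uy: "u y = g y - \<tau> g" if "y \<in> unit_ball Y" for y
    using that by (simp add: u_def m_def restr_def)
  have geu: "\<forall>y\<in>unit_ball Y. e \<le> cmod (u y)" using ge uy by simp
  define v where "v = (\<lambda>x. if x \<in> unit_ball Y then 1 / u x else 0)"
  have vA: "v \<in> Au Y" unfolding v_def by (rule Au_inverse[OF Y uA e geu])
  have "(\<lambda>x. u x * v x) = one"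
  proof
    fix x show "u x * v x = one x"
    proof (cases "x \<in> unit_ball Y")
      case True
      then have "u x \<noteq> 0" using geu e by fastforce
      then show ?thesis using True by (simp add: v_def one_def restr_def)
    next
      case False
      then show ?thesis by (simp add: v_def one_def restr_def)
    qed
  qed
  then have "\<tau> one = \<tau> u * \<tau> v" using spec_D(3)[OF t uA vA] by simp
  moreover have "\<tau> u = \<tau> g + \<tau> m" unfolding u_def by (rule spec_D(1)[OF t g mA])
  moreover have "m = (\<lambda>x. (- \<tau> g) * one x)" by (auto simp: m_def one_def restr_def)
  then have "\<tau> m = - \<tau> g * \<tau> one" using spec_D(2)[OF t one, of "- \<tau> g"] by simp
  moreover have "\<tau> one = 1" unfolding one_def by (rule tau_one[OF Y t])
  ultimately show False by simp
qed

lemma supset_part: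
  fixes f :: "'a::complex_normed_vector \<Rightarrow> complex"
  assumes f: "restr UNIV f \<in> Au UNIV"
    and c: "c \<in> (\<Inter>Y \<in> {Y. csubspace Y \<and> closed Y \<and> finite_codim Y}. (\<lambda>\<tau>. \<tau> (restr Y f)) ` M0 Y)"
  shows "c \<in> weak_cluster_0 f"
proof -
  define I where "I = {(\<Phi>, e). finite \<Phi> \<and> \<Phi> \<subseteq> cdual (UNIV::'a set) \<and> (e::real) > 0}"
  define S where "S = (\<lambda>(\<Phi>::('a \<Rightarrow> complex) set, e::real). {x::'a. x \<in> ball 0 1 \<and> (\<forall>\<phi>\<in>\<Phi>. \<phi> x = 0) \<and> cmod (f x - c) < e})"
  define F where "F = (INF i\<in>I. principal (S i))"
  have I0: "({}, 1) \<in> I" unfolding I_def by simp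
  have Ine: "I \<noteq> {}" using I0 by blast
  have dir: "\<exists>k\<in>I. principal (S k) \<le> inf (principal (S i)) (principal (S j))" if "i \<in> I" "j \<in> I" for i j
  proof -
    obtain \<Phi>1 e1 \<Phi>2 e2 where ij: "i = (\<Phi>1, e1)" "j = (\<Phi>2, e2)" by (cases i, cases j) auto
    have "(\<Phi>1 \<union> \<Phi>2, min e1 e2) \<in> I" using that ij unfolding I_def by auto
    moreover have "S (\<Phi>1 \<union> \<Phi>2, min e1 e2) \<subseteq> S i \<inter> S j" unfolding ij S_def by auto
    ultimately show ?thesis by (intro bexI[of _ "(\<Phi>1 \<union> \<Phi>2, min e1 e2)"]) auto
  qed
  have ev: "eventually P F \<longleftrightarrow> (\<exists>i\<in>I. eventually P (principal (S i)))" for P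
    unfolding F_def by (rule eventually_INF_base[OF Ine dir])
  have nonempty: "S i \<noteq> {}" if "i \<in> I" for i
  proof -
    obtain \<Phi> e where i: "i = (\<Phi>, e)" by (cases i) auto
    have \<Phi>: "finite \<Phi>" "\<Phi> \<subseteq> cdual UNIV" "e > 0" using that i unfolding I_def by auto
    define Y where "Y = {x::'a. \<forall>\<phi>\<in>\<Phi>. \<phi> x = 0}"
    have Y: "csubspace Y" "closed Y" "finite_codim Y"
      unfolding Y_def using ker_csubspace[OF \<Phi>(2)] ker_closed[OF \<Phi>(2)] finite_codim_ker[OF \<Phi>(1,2)] by auto
    then have "c \<in> (\<lambda>\<tau>. \<tau> (restr Y f)) ` M0 Y" using c by blast
    then obtain \<tau> where t: "\<tau> \<in> M0 Y" "c = \<tau> (restr Y f)" by blast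
    have ts: "\<tau> \<in> spectrum_Au Y" using t(1) unfolding M0_def by blast
    obtain y where y: "y \<in> unit_ball Y" "cmod (restr Y f y - \<tau> (restr Y f)) < e"
      using spectrum_approx[OF Y(1) ts restr_Au[OF f Y(1)] \<Phi>(3)] by blast
    have "y \<in> S i" using y t(2) unfolding i S_def Y_def unit_ball_def restr_def by auto
    then show ?thesis by blast
  qed
  have Fnb: "F \<noteq> bot"
  proof
    assume "F = bot"
    then have "eventually (\<lambda>_. False) F" by simp
    then obtain i where "i \<in> I" "eventually (\<lambda>_. False) (principal (S i))" using ev by blast
    then show False using nonempty by (simp add: eventually_principal)
  qed
  have ball: "eventually (\<lambda>x. x \<in> ball 0 1) F"
    unfolding ev using I0 by (intro bexI[of _ "({}, 1)"]) (auto simp: S_def eventually_principal)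
  have phi: "(\<phi> \<longlongrightarrow> 0) F" if "\<phi> \<in> cdual UNIV" for \<phi>
  proof (rule tendstoI)
    fix r :: real assume "r > 0"
    have "({\<phi>}, 1) \<in> I" using that unfolding I_def by auto
    then show "eventually (\<lambda>x. dist (\<phi> x) 0 < r) F"
      unfolding ev using \<open>r > 0\<close> by (intro bexI[of _ "({\<phi>}, 1)"]) (auto simp: S_def eventually_principal)
  qed
  have fc: "(f \<longlongrightarrow> c) F"
  proof (rule tendstoI)
    fix r :: real assume "r > 0"
    have "({}, r) \<in> I" using \<open>r > 0\<close> unfolding I_def by auto
    then show "eventually (\<lambda>x. dist (f x) c < r) F"
      unfolding ev by (intro bexI[of _ "({}, r)"]) (auto simp: S_def eventually_principal dist_norm)
  qed
  show ?thesis unfolding weak_cluster_0_def using Fnb ball phi fc by blast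
qed



lemma tendsto_scaleC_left:
  fixes a :: "'a::complex_normed_vector"
  assumes "(s \<longlongrightarrow> s0) F" shows "((\<lambda>n. s n *\<^sub>C a) \<longlongrightarrow> s0 *\<^sub>C a) F"
proof -
  have "((\<lambda>n. s n - s0) \<longlongrightarrow> 0) F" using Lim_null[THEN iffD1, OF assms] .
  then have "((\<lambda>n. cmod (s n - s0)) \<longlongrightarrow> 0) F" by (rule tendsto_norm_zero)
  then have t: "((\<lambda>n. cmod (s n - s0) * norm a) \<longlongrightarrow> 0) F" by (rule tendsto_mult_left_zero)
  have ev: "eventually (\<lambda>n. norm (s n *\<^sub>C a - s0 *\<^sub>C a) \<le> cmod (s n - s0) * norm a) F"
    unfolding scaleC_diff_left[symmetric] norm_scaleC by simp
  have "((\<lambda>n. s n *\<^sub>C a - s0 *\<^sub>C a) \<longlongrightarrow> 0) F"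
    by (rule Lim_null_comparison[OF ev t])
  then show ?thesis by (rule Lim_null[THEN iffD2])
qed

definition spanZ :: "'a::complex_normed_vector set \<Rightarrow> 'a \<Rightarrow> 'a set" where
  "spanZ Y a = {y + s *\<^sub>C a | y s. y \<in> Y}"

definition coefZ :: "'a::complex_normed_vector set \<Rightarrow> 'a \<Rightarrow> 'a \<Rightarrow> complex" where
  "coefZ Y a z = (THE s. \<exists>y\<in>Y. z = y + s *\<^sub>C a)"

lemma coef_uniq:
  fixes a :: "'a::complex_normed_vector"
  assumes Y: "csubspace Y" and a: "a \<notin> Y"
    and y: "y1 \<in> Y" "y2 \<in> Y" and eq: "y1 + s1 *\<^sub>C a = y2 + s2 *\<^sub>C a"
  shows "s1 = s2"
proof (rule ccontr)
  assume ne: "s1 \<noteq> s2"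
  have gen: "v - z = w - u" if h: "u + v = w + z" for u v w z :: 'a
  proof -
    have "v - z = (u + v) - u - z" by simp
    also have "\<dots> = (w + z) - u - z" by (simp only: h)
    also have "\<dots> = w - u" by (simp add: algebra_simps)
    finally show ?thesis .
  qed
  have "(s1 - s2) *\<^sub>C a = y2 - y1" unfolding scaleC_diff_left by (rule gen[OF eq])
  then have "(s1 - s2) *\<^sub>C a \<in> Y" using csubspace_diff[OF Y y(2) y(1)] by simp
  then have "(1 / (s1 - s2)) *\<^sub>C ((s1 - s2) *\<^sub>C a) \<in> Y" by (rule csubspace_scaleC[OF Y])
  then have "a \<in> Y" using ne by (simp add: scaleC_scaleC scaleC_one)
  then show False using a by simp
qed

lemma coefZ_eq:
  fixes a :: "'a::complex_normed_vector"
  assumes Y: "csubspace Y" and a: "a \<notin> Y" and y: "y \<in> Y"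
  shows "coefZ Y a (y + s *\<^sub>C a) = s"
  unfolding coefZ_def
proof (rule the_equality)
  show "\<exists>y'\<in>Y. y + s *\<^sub>C a = y' + s *\<^sub>C a" using y by blast
  fix s' assume "\<exists>y'\<in>Y. y + s *\<^sub>C a = y' + s' *\<^sub>C a"
  then obtain y' where y': "y' \<in> Y" "y + s *\<^sub>C a = y' + s' *\<^sub>C a" by blast
  have "s = s'" by (rule coef_uniq[OF Y a y y'(1) y'(2)])
  then show "s' = s" by simp
qed

lemma spanZ_D:
  assumes "z \<in> spanZ Y a" obtains y s where "y \<in> Y" "z = y + s *\<^sub>C a"
  using assms unfolding spanZ_def by blast

lemma spanZ_I: "y \<in> Y \<Longrightarrow> y + s *\<^sub>C a \<in> spanZ Y a"
  unfolding spanZ_def by blast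

lemma coefZ_bound:
  fixes a :: "'a::complex_normed_vector"
  assumes Y: "csubspace Y" "closed Y" and a: "a \<notin> Y" and z: "z \<in> spanZ Y a"
  shows "cmod (coefZ Y a z) * infdist a Y \<le> norm z"
proof -
  obtain y s where ys: "y \<in> Y" "z = y + s *\<^sub>C a" using z by (rule spanZ_D)
  have cz: "coefZ Y a z = s" using coefZ_eq[OF Y(1) a ys(1)] ys(2) by simp
  show ?thesis
  proof (cases "s = 0")
    case True then show ?thesis using cz by simp
  next
    case False
    define y' where "y' = (- 1 / s) *\<^sub>C y"
    have y'Y: "y' \<in> Y" unfolding y'_def using csubspace_scaleC[OF Y(1) ys(1)] .
    have "s *\<^sub>C (a - y') = s *\<^sub>C a + y"
      unfolding y'_def using False by (simp add: scaleC_diff_right scaleC_scaleC scaleC_one scaleC_minus1)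
    then have "z = s *\<^sub>C (a - y')" using ys(2) by (simp add: add.commute)
    then have "norm z = cmod s * dist a y'" by (simp add: norm_scaleC dist_norm)
    moreover have "infdist a Y \<le> dist a y'" by (rule infdist_le[OF y'Y])
    ultimately show ?thesis using cz by (simp add: mult_left_mono)
  qed
qed

lemma spanZ_csubspace:
  fixes a :: "'a::complex_normed_vector"
  assumes Y: "csubspace Y" shows "csubspace (spanZ Y a)"
  unfolding csubspace_def
proof (intro conjI ballI allI)
  show "0 \<in> spanZ Y a" using spanZ_I[OF csubspace_0[OF Y], of 0 a] by simp
next
  fix x y assume xZ: "x \<in> spanZ Y a" and yZ: "y \<in> spanZ Y a"
  obtain y1 s1 where 1: "y1 \<in> Y" "x = y1 + s1 *\<^sub>C a" using xZ by (rule spanZ_D)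
  obtain y2 s2 where 2: "y2 \<in> Y" "y = y2 + s2 *\<^sub>C a" using yZ by (rule spanZ_D)
  have xy: "x + y = (y1 + y2) + (s1 + s2) *\<^sub>C a" using 1 2 by (simp add: scaleC_add_left algebra_simps)
  show "x + y \<in> spanZ Y a" unfolding xy by (rule spanZ_I[OF csubspace_add[OF Y 1(1) 2(1)]])
next
  fix c x assume xZ: "x \<in> spanZ Y a"
  obtain y1 s1 where 1: "y1 \<in> Y" "x = y1 + s1 *\<^sub>C a" using xZ by (rule spanZ_D)
  have cx: "c *\<^sub>C x = c *\<^sub>C y1 + (c * s1) *\<^sub>C a" using 1 by (simp add: scaleC_add_right scaleC_scaleC)
  show "c *\<^sub>C x \<in> spanZ Y a" unfolding cx by (rule spanZ_I[OF csubspace_scaleC[OF Y 1(1)]])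
qed

lemma coefZ_linear:
  fixes a :: "'a::complex_normed_vector"
  assumes Y: "csubspace Y" and a: "a \<notin> Y"
  shows "clinear_on (spanZ Y a) (coefZ Y a)"
  unfolding clinear_on_def
proof (intro conjI ballI allI)
  fix x y assume xZ: "x \<in> spanZ Y a" and yZ: "y \<in> spanZ Y a"
  obtain y1 s1 where 1: "y1 \<in> Y" "x = y1 + s1 *\<^sub>C a" using xZ by (rule spanZ_D)
  obtain y2 s2 where 2: "y2 \<in> Y" "y = y2 + s2 *\<^sub>C a" using yZ by (rule spanZ_D)
  note yy = 1 2
  have xy: "x + y = (y1 + y2) + (s1 + s2) *\<^sub>C a" using yy by (simp add: scaleC_add_left algebra_simps)
  have c1: "coefZ Y a (x + y) = s1 + s2"
    unfolding xy by (rule coefZ_eq[OF Y a csubspace_add[OF Y yy(1) yy(3)]])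
  have c2: "coefZ Y a x = s1" unfolding yy(2) by (rule coefZ_eq[OF Y a yy(1)])
  have c3: "coefZ Y a y = s2" unfolding yy(4) by (rule coefZ_eq[OF Y a yy(3)])
  show "coefZ Y a (x + y) = coefZ Y a x + coefZ Y a y" using c1 c2 c3 by simp
next
  fix c x assume xZ: "x \<in> spanZ Y a"
  obtain y1 s1 where yy: "y1 \<in> Y" "x = y1 + s1 *\<^sub>C a" using xZ by (rule spanZ_D)
  have cx: "c *\<^sub>C x = c *\<^sub>C y1 + (c * s1) *\<^sub>C a" using yy by (simp add: scaleC_add_right scaleC_scaleC)
  have c1: "coefZ Y a (c *\<^sub>C x) = c * s1"
    unfolding cx by (rule coefZ_eq[OF Y a csubspace_scaleC[OF Y yy(1)]])
  have c2: "coefZ Y a x = s1" unfolding yy(2) by (rule coefZ_eq[OF Y a yy(1)])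
  show "coefZ Y a (c *\<^sub>C x) = c * coefZ Y a x" using c1 c2 by simp
qed

lemma spanZ_closed:
  fixes a :: "'a::{complex_normed_vector, complete_space}"
  assumes Y: "csubspace Y" "closed Y" and a: "a \<notin> Y"
  shows "closed (spanZ Y a)"
  unfolding closed_sequential_limits
proof (intro allI impI, elim conjE)
  fix x l assume x: "\<forall>n. x n \<in> spanZ Y a" and xl: "x \<longlonglongrightarrow> l"
  define \<delta> where "\<delta> = infdist a Y"
  have \<delta>: "\<delta> > 0" unfolding \<delta>_def using infdist_pos_not_in_closed[OF Y(2) _ a] csubspace_0[OF Y(1)] by auto
  have lin: "clinear_on (spanZ Y a) (coefZ Y a)" by (rule coefZ_linear[OF Y(1) a])
  have Z: "csubspace (spanZ Y a)" by (rule spanZ_csubspace[OF Y(1)])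
  define s where "s = (\<lambda>n. coefZ Y a (x n))"
  have sd: "cmod (s n - s m) \<le> norm (x n - x m) / \<delta>" for n m
  proof -
    have "s n - s m = coefZ Y a (x n - x m)" unfolding s_def using clin_diff[OF lin Z] x by simp
    moreover have "cmod (coefZ Y a (x n - x m)) * \<delta> \<le> norm (x n - x m)"
      unfolding \<delta>_def using coefZ_bound[OF Y a] csubspace_diff[OF Z] x by blast
    ultimately show ?thesis using \<delta> by (simp add: pos_le_divide_eq)
  qed
  have "Cauchy s"
  proof (rule CauchyI)
    fix e :: real assume "e > 0"
    then have "e * \<delta> > 0" using \<delta> by simp
    then obtain M where M: "\<forall>m\<ge>M. \<forall>n\<ge>M. norm (x m - x n) < e * \<delta>"
      using CauchyD[OF LIMSEQ_imp_Cauchy[OF xl]] by blast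
    show "\<exists>M. \<forall>m\<ge>M. \<forall>n\<ge>M. norm (s m - s n) < e"
    proof (intro exI[of _ M] allI impI)
      fix m n assume "m \<ge> M" "n \<ge> M"
      then have "norm (x m - x n) / \<delta> < e" using M \<delta> by (simp add: divide_less_eq)
      then show "norm (s m - s n) < e" using sd[of m n] by simp
    qed
  qed
  then obtain s0 where s0: "s \<longlonglongrightarrow> s0" using Cauchy_convergent_iff convergent_def by blast
  have lim: "(\<lambda>n. x n - s n *\<^sub>C a) \<longlonglongrightarrow> l - s0 *\<^sub>C a"
    by (intro tendsto_diff xl tendsto_scaleC_left s0)
  have inY: "x n - s n *\<^sub>C a \<in> Y" for n
  proof -
    obtain y t where yt: "y \<in> Y" "x n = y + t *\<^sub>C a" using x[rule_format, of n] by (rule spanZ_D)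
    then have "s n = t" unfolding s_def using coefZ_eq[OF Y(1) a] by simp
    then show ?thesis using yt by simp
  qed
  have "l - s0 *\<^sub>C a \<in> Y" by (rule closed_sequentially[OF Y(2) inY lim])
  then have "(l - s0 *\<^sub>C a) + s0 *\<^sub>C a \<in> spanZ Y a" by (rule spanZ_I)
  then show "l \<in> spanZ Y a" by simp
qed



definition plin :: "('a::complex_normed_vector \<Rightarrow> 'a) \<Rightarrow> bool" where
  "plin P \<longleftrightarrow> (\<forall>x y. P (x + y) = P x + P y) \<and> (\<forall>c x. P (c *\<^sub>C x) = c *\<^sub>C P x)"

lemma sum_bound:
  assumes "finite \<Phi>" "\<Phi> \<subseteq> cdual (UNIV::'a::complex_normed_vector set)"
  shows "\<exists>M\<ge>0. \<forall>x::'a. (\<Sum>\<phi>\<in>\<Phi>. cmod (\<phi> x)) \<le> M * norm x"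
  using assms
proof (induction \<Phi> rule: finite_induct)
  case empty
  show ?case by (rule exI[of _ 0]) simp
next
  case (insert \<phi> \<Phi>)
  obtain M where M: "M \<ge> 0" "\<forall>x::'a. (\<Sum>\<phi>\<in>\<Phi>. cmod (\<phi> x)) \<le> M * norm x" using insert by auto
  obtain K where K: "K \<ge> 0" "\<forall>x::'a\<in>UNIV. cmod (\<phi> x) \<le> K * norm x"
    using cdual_bound[of \<phi> UNIV] insert.prems by blast
  have "(\<Sum>\<phi>\<in>insert \<phi> \<Phi>. cmod (\<phi> x)) \<le> (K + M) * norm x" for x :: 'a
  proof -
    have "(\<Sum>\<phi>\<in>insert \<phi> \<Phi>. cmod (\<phi> x)) = cmod (\<phi> x) + (\<Sum>\<phi>\<in>\<Phi>. cmod (\<phi> x))"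
      using insert.hyps by simp
    also have "\<dots> \<le> K * norm x + M * norm x" using K M by (intro add_mono) auto
    finally show ?thesis by (simp add: distrib_right)
  qed
  then show ?case using K M by (intro exI[of _ "K + M"]) auto
qed

lemma proj_exists:
  fixes F :: "'a::{complex_normed_vector, complete_space} set"
  assumes "finite F"
  shows "\<forall>Y. csubspace Y \<and> closed Y \<and> (\<forall>x. \<exists>y\<in>Y. \<exists>c. x = y + (\<Sum>a\<in>F. c a *\<^sub>C a)) \<longrightarrow>
    (\<exists>P \<Phi> K. finite \<Phi> \<and> \<Phi> \<subseteq> cdual UNIV \<and> K \<ge> 0 \<and> plin P \<and> (\<forall>x. P x \<in> Y) \<and>
       (\<forall>x. norm (x - P x) \<le> K * (\<Sum>\<phi>\<in>\<Phi>. cmod (\<phi> x))))"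
  using assms
proof (induction F rule: finite_induct)
  case empty
  show ?case
  proof (intro allI impI, elim conjE)
    fix Y :: "'a set" assume rep: "\<forall>x. \<exists>y\<in>Y. \<exists>c. x = y + (\<Sum>a\<in>{}. c a *\<^sub>C a)"
    have "x \<in> Y" for x using rep by auto
    then show "\<exists>P \<Phi> K. finite \<Phi> \<and> \<Phi> \<subseteq> cdual UNIV \<and> K \<ge> 0 \<and> plin P \<and> (\<forall>x. P x \<in> Y) \<and>
       (\<forall>x. norm (x - P x) \<le> K * (\<Sum>\<phi>\<in>\<Phi>. cmod (\<phi> x)))"
      by (intro exI[of _ "\<lambda>x. x"] exI[of _ "{}"] exI[of _ 0]) (simp add: plin_def)
  qed
next
  case (insert a F)
  show ?case
  proof (intro allI impI, elim conjE)
    fix Y :: "'a set"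
    assume Y: "csubspace Y" "closed Y" and rep: "\<forall>x. \<exists>y\<in>Y. \<exists>c. x = y + (\<Sum>b\<in>insert a F. c b *\<^sub>C b)"
    have rep': "\<exists>y\<in>Y. \<exists>c. x = y + c a *\<^sub>C a + (\<Sum>b\<in>F. c b *\<^sub>C b)" for x
    proof -
      obtain y c where "y \<in> Y" "x = y + (\<Sum>b\<in>insert a F. c b *\<^sub>C b)" using rep by blast
      then show ?thesis using insert.hyps by (auto simp: add.assoc)
    qed
    show "\<exists>P \<Phi> K. finite \<Phi> \<and> \<Phi> \<subseteq> cdual UNIV \<and> K \<ge> 0 \<and> plin P \<and> (\<forall>x. P x \<in> Y) \<and>
       (\<forall>x. norm (x - P x) \<le> K * (\<Sum>\<phi>\<in>\<Phi>. cmod (\<phi> x)))"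
    proof (cases "a \<in> Y")
      case True
      have repY: "\<forall>x. \<exists>y\<in>Y. \<exists>c. x = y + (\<Sum>b\<in>F. c b *\<^sub>C b)"
      proof
        fix x
        obtain y c where yc: "y \<in> Y" "x = y + c a *\<^sub>C a + (\<Sum>b\<in>F. c b *\<^sub>C b)" using rep' by blast
        have "y + c a *\<^sub>C a \<in> Y" using csubspace_add[OF Y(1) yc(1) csubspace_scaleC[OF Y(1) True]] .
        then show "\<exists>y\<in>Y. \<exists>c. x = y + (\<Sum>b\<in>F. c b *\<^sub>C b)" using yc(2) by blast
      qed
      show ?thesis by (rule insert.IH[rule_format, OF conjI[OF Y(1) conjI[OF Y(2) repY]]])
    next
      case False
      define Z where "Z = spanZ Y a"
      have Z: "csubspace Z" "closed Z" unfolding Z_def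
        using spanZ_csubspace[OF Y(1)] spanZ_closed[OF Y False] by auto
      have repZ: "\<forall>x. \<exists>z\<in>Z. \<exists>c. x = z + (\<Sum>b\<in>F. c b *\<^sub>C b)"
      proof
        fix x
        obtain y c where yc: "y \<in> Y" "x = y + c a *\<^sub>C a + (\<Sum>b\<in>F. c b *\<^sub>C b)" using rep' by blast
        have "y + c a *\<^sub>C a \<in> Z" unfolding Z_def by (rule spanZ_I[OF yc(1)])
        then show "\<exists>z\<in>Z. \<exists>c. x = z + (\<Sum>b\<in>F. c b *\<^sub>C b)" using yc(2) by blast
      qed
      obtain PZ \<Phi> K where PZ: "finite \<Phi>" "\<Phi> \<subseteq> cdual UNIV" "K \<ge> 0" "plin PZ" "\<forall>x. PZ x \<in> Z"
        "\<forall>x. norm (x - PZ x) \<le> K * (\<Sum>\<phi>\<in>\<Phi>. cmod (\<phi> x))"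
        using insert.IH[rule_format, OF conjI[OF Z(1) conjI[OF Z(2) repZ]]] by blast
      define \<psi> where "\<psi> = (\<lambda>x. coefZ Y a (PZ x))"
      define P where "P = (\<lambda>x. PZ x - \<psi> x *\<^sub>C a)"
      have lin: "clinear_on Z (coefZ Y a)" unfolding Z_def by (rule coefZ_linear[OF Y(1) False])
      have PZl: "PZ (x + y) = PZ x + PZ y" "PZ (c *\<^sub>C x) = c *\<^sub>C PZ x" for x y c
        using PZ(4) unfolding plin_def by blast+
      have \<psi>add: "\<psi> (x + y) = \<psi> x + \<psi> y" for x y
        unfolding \<psi>_def PZl(1) using clin_add[OF lin] PZ(5) by blast
      have \<psi>sc: "\<psi> (c *\<^sub>C x) = c * \<psi> x" for c x
        unfolding \<psi>_def PZl(2) using clin_scaleC[OF lin] PZ(5) by blast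
      have PY: "P x \<in> Y" for x
      proof -
        obtain y s where ys: "y \<in> Y" "PZ x = y + s *\<^sub>C a" using PZ(5)[rule_format, of x] unfolding Z_def by (rule spanZ_D)
        have "\<psi> x = s" unfolding \<psi>_def ys(2) by (rule coefZ_eq[OF Y(1) False ys(1)])
        then show ?thesis unfolding P_def using ys by simp
      qed
      have Pl: "plin P" unfolding plin_def
      proof (intro conjI allI)
        fix x y show "P (x + y) = P x + P y"
          unfolding P_def PZl(1) \<psi>add by (simp add: scaleC_add_left algebra_simps)
      next
        fix c x show "P (c *\<^sub>C x) = c *\<^sub>C P x"
          unfolding P_def PZl(2) \<psi>sc by (simp add: scaleC_diff_right scaleC_scaleC)
      qed
      define \<delta> where "\<delta> = infdist a Y"
      have \<delta>: "\<delta> > 0" unfolding \<delta>_def using infdist_pos_not_in_closed[OF Y(2) _ False] csubspace_0[OF Y(1)] by auto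
      obtain M where M: "M \<ge> 0" "\<forall>x::'a. (\<Sum>\<phi>\<in>\<Phi>. cmod (\<phi> x)) \<le> M * norm x"
        using sum_bound[OF PZ(1,2)] by blast
      have \<psi>b: "cmod (\<psi> x) \<le> ((1 + K * M) / \<delta>) * norm x" for x
      proof -
        have "norm (PZ x) \<le> norm x + norm (x - PZ x)" using norm_triangle_ineq4[of x "x - PZ x"] by simp
        also have "\<dots> \<le> norm x + K * (M * norm x)"
        proof -
          have "norm (x - PZ x) \<le> K * (\<Sum>\<phi>\<in>\<Phi>. cmod (\<phi> x))" using PZ(6) by blast
          also have "\<dots> \<le> K * (M * norm x)" by (rule mult_left_mono[OF M(2)[rule_format] PZ(3)])
          finally show ?thesis by simp
        qed
        finally have n: "norm (PZ x) \<le> (1 + K * M) * norm x" by (simp add: algebra_simps)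
        have "cmod (\<psi> x) * \<delta> \<le> norm (PZ x)"
          unfolding \<psi>_def \<delta>_def using coefZ_bound[OF Y False, of "PZ x"] PZ(5) unfolding Z_def by blast
        then have "cmod (\<psi> x) * \<delta> \<le> (1 + K * M) * norm x" using n by linarith
        then show ?thesis using \<delta> by (simp add: field_simps)
      qed
      have "clinear_on UNIV \<psi>" unfolding clinear_on_def using \<psi>add \<psi>sc by simp
      moreover have "cbounded_on UNIV \<psi>" unfolding cbounded_on_def
        by (rule exI[of _ "(1 + K * M) / \<delta>"]) (use \<psi>b in blast)
      ultimately have \<psi>d: "\<psi> \<in> cdual UNIV" unfolding cdual_def by blast
      have bound: "norm (x - P x) \<le> (K + norm a) * (\<Sum>\<phi>\<in>insert \<psi> \<Phi>. cmod (\<phi> x))" for x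
      proof -
        define S where "S = (\<Sum>\<phi>\<in>insert \<psi> \<Phi>. cmod (\<phi> x))"
        have S1: "(\<Sum>\<phi>\<in>\<Phi>. cmod (\<phi> x)) \<le> S" unfolding S_def
          using PZ(1) by (intro sum_mono2) auto
        have S2: "cmod (\<psi> x) \<le> S" unfolding S_def
          using PZ(1) by (intro member_le_sum) auto
        have xP: "x - P x = (x - PZ x) + \<psi> x *\<^sub>C a" unfolding P_def by simp
        have "norm (x - P x) \<le> norm (x - PZ x) + norm (\<psi> x *\<^sub>C a)"
          unfolding xP by (rule norm_triangle_ineq)
        then have "norm (x - P x) \<le> norm (x - PZ x) + cmod (\<psi> x) * norm a"
          by (simp only: norm_scaleC)
        also have "\<dots> \<le> K * S + S * norm a"
        proof (rule add_mono)
          have "norm (x - PZ x) \<le> K * (\<Sum>\<phi>\<in>\<Phi>. cmod (\<phi> x))" using PZ(6) by blast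
          also have "\<dots> \<le> K * S" by (rule mult_left_mono[OF S1 PZ(3)])
          finally show "norm (x - PZ x) \<le> K * S" .
          show "cmod (\<psi> x) * norm a \<le> S * norm a" by (rule mult_right_mono[OF S2]) simp
        qed
        finally show ?thesis unfolding S_def by (simp add: algebra_simps)
      qed
      show ?thesis
        using PZ(1,2,3) \<psi>d Pl PY bound
        by (intro exI[of _ P] exI[of _ "insert \<psi> \<Phi>"] exI[of _ "K + norm a"]) auto
    qed
  qed
qed



lemma bounded_image_iff_c: "bounded (g ` S) \<longleftrightarrow> (\<exists>b. \<forall>y\<in>S. cmod (g y) \<le> b)"
  for g :: "'a \<Rightarrow> complex" unfolding bounded_iff by auto

lemma bounded_add_c: "bounded (g ` S) \<Longrightarrow> bounded (h ` S) \<Longrightarrow> bounded ((\<lambda>x. g x + h x) ` S)"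
  for g h :: "'a \<Rightarrow> complex"
proof -
  assume "bounded (g ` S)" "bounded (h ` S)"
  then obtain a b where ab: "\<forall>y\<in>S. cmod (g y) \<le> a" "\<forall>y\<in>S. cmod (h y) \<le> b"
    unfolding bounded_image_iff_c by blast
  have "cmod (g y + h y) \<le> a + b" if "y \<in> S" for y
    using norm_triangle_ineq[of "g y" "h y"] ab that by fastforce
  then show ?thesis unfolding bounded_image_iff_c by blast
qed

lemma bounded_cmult_c: "bounded (g ` S) \<Longrightarrow> bounded ((\<lambda>x. c * g x) ` S)"
  for g :: "'a \<Rightarrow> complex"
proof -
  assume "bounded (g ` S)"
  then obtain a where a: "\<forall>y\<in>S. cmod (g y) \<le> a" unfolding bounded_image_iff_c by blast
  have "cmod (c * g y) \<le> cmod c * a" if "y \<in> S" for y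
    using a that by (simp add: norm_mult mult_left_mono)
  then show ?thesis unfolding bounded_image_iff_c by blast
qed

lemma bounded_mult_c: "bounded (g ` S) \<Longrightarrow> bounded (h ` S) \<Longrightarrow> bounded ((\<lambda>x. g x * h x) ` S)"
  for g h :: "'a \<Rightarrow> complex"
proof -
  assume "bounded (g ` S)" "bounded (h ` S)"
  then obtain a b where ab: "\<forall>y\<in>S. cmod (g y) \<le> a" "\<forall>y\<in>S. cmod (h y) \<le> b"
    unfolding bounded_image_iff_c by blast
  have "cmod (g y * h y) \<le> a * b" if "y \<in> S" for y
  proof -
    have "cmod (g y * h y) = cmod (g y) * cmod (h y)" by (simp add: norm_mult)
    also have "\<dots> \<le> a * b" using ab that by (intro mult_mono) (auto intro: order_trans[OF norm_ge_zero])
    finally show ?thesis .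
  qed
  then show ?thesis unfolding bounded_image_iff_c by blast
qed

lemma cluster_char:
  fixes w :: "'b \<Rightarrow> 'a::complex_normed_vector" and F :: "'b filter"
  assumes Y: "csubspace Y" and Fnb: "F \<noteq> bot"
    and wY: "eventually (\<lambda>x. w x \<in> unit_ball Y) F"
    and wz: "\<forall>z\<in>cdual Y. ((\<lambda>x. z (w x)) \<longlongrightarrow> 0) F"
    and g0: "g0 \<in> Au Y" and g0c: "((\<lambda>x. g0 (w x)) \<longlongrightarrow> c) F"
  shows "\<exists>\<tau>\<in>M0 Y. \<tau> g0 = c"
proof -
  define bd where "bd = (\<lambda>g::'a \<Rightarrow> complex. bounded (g ` unit_ball Y))"
  define E where "E = (\<lambda>y::'a. \<lambda>g::'a \<Rightarrow> complex. if bd g then g y else 0)"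
  define B where "B = (\<lambda>g::'a \<Rightarrow> complex. if bd g then (SOME b. \<forall>y\<in>unit_ball Y. cmod (g y) \<le> b) else 0)"
  define K0 where "K0 = PiE UNIV (\<lambda>g. cball (0::complex) (B g))"
  have EK: "E y \<in> K0" if "y \<in> unit_ball Y" for y
  proof -
    have "E y g \<in> cball 0 (B g)" for g
    proof (cases "bd g")
      case True
      then have "\<exists>b. \<forall>y\<in>unit_ball Y. cmod (g y) \<le> b" unfolding bd_def bounded_image_iff_c .
      then have "\<forall>y\<in>unit_ball Y. cmod (g y) \<le> (SOME b. \<forall>y\<in>unit_ball Y. cmod (g y) \<le> b)" by (rule someI_ex)
      then have "\<forall>y\<in>unit_ball Y. cmod (g y) \<le> B g" unfolding B_def using True by simp
      then show ?thesis using True that by (simp add: E_def)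
    next
      case False
      then show ?thesis by (simp add: E_def B_def)
    qed
    then show ?thesis unfolding K0_def by (simp add: PiE_iff)
  qed
  have cK: "compact K0"
  proof -
    have "compactin (product_topology (\<lambda>_. euclidean) UNIV) K0"
      unfolding K0_def compactin_PiE by simp
    then show ?thesis by (simp add: euclidean_product_topology)
  qed
  define G0 where "G0 = filtermap (\<lambda>x. E (w x)) F"
  have G0nb: "G0 \<noteq> bot" unfolding G0_def using Fnb by (simp add: filtermap_bot_iff)
  have evG0: "eventually Q G0" if "eventually (\<lambda>x. Q (E (w x))) F" for Q
    unfolding G0_def eventually_filtermap using that .
  have "eventually (\<lambda>q. q \<in> K0) G0"
    by (rule evG0) (use wY EK in \<open>auto elim: eventually_mono\<close>)
  then obtain p where p: "p \<in> K0" and Gnb: "inf (nhds p) G0 \<noteq> bot"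
    using cK G0nb unfolding compact_filter by blast
  define G where "G = inf (nhds p) G0"
  have Gnb': "G \<noteq> bot" unfolding G_def by (rule Gnb)
  have evG: "eventually Q G" if "eventually (\<lambda>x. Q (E (w x))) F" for Q
    unfolding G_def by (rule filter_leD[OF inf_le2 evG0[OF that]])
  have projlim: "((\<lambda>q. q g) \<longlongrightarrow> p g) G" for g
  proof -
    have "((\<lambda>q. q) \<longlongrightarrow> p) G"
      unfolding G_def by (rule tendsto_mono[OF inf_le1 filterlim_ident])
    then show ?thesis
      by (rule continuous_on_tendsto_compose[OF continuous_on_product_coordinates]) auto
  qed
  have transfer: "p g = L" if "((\<lambda>x. E (w x) g) \<longlongrightarrow> L) F" for g L
  proof -
    have "((\<lambda>q. q g) \<longlongrightarrow> L) G0" unfolding G0_def filterlim_filtermap using that .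
    then have "((\<lambda>q. q g) \<longlongrightarrow> L) G" unfolding G_def by (rule tendsto_mono[OF inf_le2])
    then show ?thesis using tendsto_unique[OF Gnb' projlim] by blast
  qed
  have bdAu: "bd g" if "g \<in> Au Y" for g unfolding bd_def using Au_D(2)[OF that] .
  have eq_transfer: "p g = h (p ga) (p gb)"
    if ev: "\<And>y. E y g = h (E y ga) (E y gb)" and hc: "\<And>a b. ((\<lambda>q. h (q ga) (q gb)) \<longlongrightarrow> h (p ga) (p gb)) G"
    for g ga gb and h :: "complex \<Rightarrow> complex \<Rightarrow> complex"
  proof -
    have "eventually (\<lambda>q. h (q ga) (q gb) = q g) G"
      by (rule evG) (simp add: ev)
    then have "((\<lambda>q. q g) \<longlongrightarrow> h (p ga) (p gb)) G" by (rule Lim_transform_eventually[OF hc])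
    then show ?thesis using tendsto_unique[OF Gnb' projlim] by blast
  qed
  have add: "p (\<lambda>x. g x + h x) = p g + p h" if "g \<in> Au Y" "h \<in> Au Y" for g h
  proof (rule eq_transfer[where h = "\<lambda>a b. a + b"])
    fix y show "E y (\<lambda>x. g x + h x) = E y g + E y h"
      using bdAu[OF that(1)] bdAu[OF that(2)] bounded_add_c[of g "unit_ball Y" h] unfolding E_def bd_def by simp
  qed (intro tendsto_add projlim)
  have mul: "p (\<lambda>x. g x * h x) = p g * p h" if "g \<in> Au Y" "h \<in> Au Y" for g h
  proof (rule eq_transfer[where h = "\<lambda>a b. a * b"])
    fix y show "E y (\<lambda>x. g x * h x) = E y g * E y h"
      using bdAu[OF that(1)] bdAu[OF that(2)] bounded_mult_c[of g "unit_ball Y" h] unfolding E_def bd_def by simp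
  qed (intro tendsto_mult projlim)
  have cm: "p (\<lambda>x. k * g x) = k * p g" if "g \<in> Au Y" for g k
  proof (rule eq_transfer[where h = "\<lambda>a b. k * a" and gb = g])
    fix y show "E y (\<lambda>x. k * g x) = k * E y g"
      using bdAu[OF that(1)] bounded_cmult_c[of g "unit_ball Y" k] unfolding E_def bd_def by simp
  qed (intro tendsto_mult projlim tendsto_const)
  define one where "one = restr Y (\<lambda>_. 1::complex)"
  have oneA: "one \<in> Au Y" unfolding one_def by (rule Au_const[OF Y])
  have "p one = 1"
  proof (rule transfer)
    have "eventually (\<lambda>x. 1 = E (w x) one) F"
      using wY by eventually_elim (use bdAu[OF oneA] in \<open>simp add: E_def one_def restr_def\<close>)
    then show "((\<lambda>x. E (w x) one) \<longlongrightarrow> 1) F" by (rule Lim_transform_eventually[OF tendsto_const])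
  qed
  then have nz: "\<exists>g\<in>Au Y. p g \<noteq> 0" using oneA by (intro bexI[of _ one]) auto
  have spec: "p \<in> spectrum_Au Y" unfolding spectrum_Au_def mem_Collect_eq
    using add cm mul nz by blast
  have zero: "p (restr Y z) = 0" if z: "z \<in> cdual Y" for z
  proof (rule transfer)
    obtain Kz where Kz: "Kz \<ge> 0" "\<forall>x\<in>Y. cmod (z x) \<le> Kz * norm x" using cdual_bound[OF z] by blast
    have "cmod (restr Y z y) \<le> Kz" if "y \<in> unit_ball Y" for y
    proof -
      have "cmod (restr Y z y) = cmod (z y)" using that by (simp add: restr_def)
      also have "\<dots> \<le> Kz * norm y" using Kz unit_ball_sub(1)[OF that] by blast
      also have "\<dots> \<le> Kz * 1" using unit_ball_sub(2)[OF that] Kz(1) by (intro mult_left_mono) auto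
      finally show ?thesis by simp
    qed
    then have bz: "bd (restr Y z)" unfolding bd_def bounded_image_iff_c by blast
    have "eventually (\<lambda>x. z (w x) = E (w x) (restr Y z)) F"
      using wY by eventually_elim (use bz in \<open>simp add: E_def restr_def\<close>)
    then show "((\<lambda>x. E (w x) (restr Y z)) \<longlongrightarrow> 0) F"
      by (rule Lim_transform_eventually[OF wz[rule_format, OF z]])
  qed
  have val: "p g0 = c"
  proof (rule transfer)
    have "eventually (\<lambda>x. g0 (w x) = E (w x) g0) F"
      using bdAu[OF g0] by (simp add: E_def)
    then show "((\<lambda>x. E (w x) g0) \<longlongrightarrow> c) F" by (rule Lim_transform_eventually[OF g0c])
  qed
  have "p \<in> M0 Y" unfolding M0_def using spec zero by blast
  then show ?thesis using val by blast
qed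



lemma approx_net:
  fixes f :: "'a::{complex_normed_vector, complete_space} \<Rightarrow> complex" and F :: "'a filter"
  assumes f: "restr UNIV f \<in> Au UNIV" and Y: "csubspace Y" "closed Y" "finite_codim Y"
    and ballF: "eventually (\<lambda>x. x \<in> ball 0 1) F"
    and wk: "\<forall>\<phi>\<in>cdual UNIV. (\<phi> \<longlongrightarrow> 0) F" and fc: "(f \<longlongrightarrow> c) F"
  shows "\<exists>w. eventually (\<lambda>x. w x \<in> unit_ball Y) F \<and> ((\<lambda>x. f (w x)) \<longlongrightarrow> c) F \<and>
             (\<forall>z\<in>cdual Y. ((\<lambda>x. z (w x)) \<longlongrightarrow> 0) F)"
proof -
  obtain Fs where Fs: "finite Fs" "\<forall>x. \<exists>y\<in>Y. \<exists>c. x = y + (\<Sum>a\<in>Fs. c a *\<^sub>C a)"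
    using Y(3) unfolding finite_codim_def by blast
  obtain P \<Phi> K where P: "finite \<Phi>" "\<Phi> \<subseteq> cdual UNIV" "K \<ge> 0" "plin P" "\<forall>x. P x \<in> Y"
      "\<forall>x. norm (x - P x) \<le> K * (\<Sum>\<phi>\<in>\<Phi>. cmod (\<phi> x))"
    using proj_exists[OF Fs(1), rule_format, OF conjI[OF Y(1) conjI[OF Y(2) Fs(2)]]] by blast
  obtain M where M: "M \<ge> 0" "\<forall>x::'a. (\<Sum>\<phi>\<in>\<Phi>. cmod (\<phi> x)) \<le> M * norm x"
    using sum_bound[OF P(1,2)] by blast
  have Pl: "P (x + y) = P x + P y" "P (k *\<^sub>C x) = k *\<^sub>C P x" for x y k
    using P(4) unfolding plin_def by blast+
  define d where "d = (\<lambda>x. norm (x - P x))"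
  have d0: "d x \<ge> 0" for x unfolding d_def by simp
  have Pn: "norm (P x) \<le> norm x + d x" for x
  proof -
    have "norm (P x) = norm (x - (x - P x))" by simp
    also have "\<dots> \<le> norm x + norm (x - P x)" by (rule norm_triangle_ineq4)
    finally show ?thesis unfolding d_def .
  qed
  have dlim: "(d \<longlongrightarrow> 0) F"
  proof (rule tendsto_sandwich[OF _ _ tendsto_const])
    show "eventually (\<lambda>x. 0 \<le> d x) F" using d0 by simp
    show "eventually (\<lambda>x. d x \<le> K * (\<Sum>\<phi>\<in>\<Phi>. cmod (\<phi> x))) F" using P(6) unfolding d_def by simp
    have "((\<lambda>x. \<Sum>\<phi>\<in>\<Phi>. cmod (\<phi> x)) \<longlongrightarrow> (\<Sum>\<phi>\<in>\<Phi>. 0)) F"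
    proof (rule tendsto_sum)
      fix \<phi> assume "\<phi> \<in> \<Phi>"
      then have "(\<phi> \<longlongrightarrow> 0) F" using P(2) wk by blast
      then show "((\<lambda>x. cmod (\<phi> x)) \<longlongrightarrow> 0) F" by (rule tendsto_norm_zero)
    qed
    then have "((\<lambda>x. K * (\<Sum>\<phi>\<in>\<Phi>. cmod (\<phi> x))) \<longlongrightarrow> K * 0) F" by (intro tendsto_mult tendsto_const) simp
    then show "((\<lambda>x. K * (\<Sum>\<phi>\<in>\<Phi>. cmod (\<phi> x))) \<longlongrightarrow> 0) F" by simp
  qed
  define w where "w = (\<lambda>x. (1 / (1 + d x)) *\<^sub>R P x)"
  have wball: "w x \<in> unit_ball Y" if x: "x \<in> ball 0 1" for x
  proof -
    have "w x \<in> Y" unfolding w_def using csubspace_scaleR[OF Y(1) P(5)[rule_format]] .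
    moreover have "norm (w x) < 1"
    proof -
      have nx: "norm x < 1" using x by simp
      have "norm (w x) = norm (P x) / (1 + d x)" unfolding w_def using d0[of x] by simp
      also have "\<dots> \<le> (norm x + d x) / (1 + d x)" using Pn d0[of x] by (intro divide_right_mono) auto
      also have "\<dots> < 1" using nx d0[of x] by simp
      finally show ?thesis .
    qed
    ultimately show ?thesis unfolding unit_ball_def by simp
  qed
  have wYev: "eventually (\<lambda>x. w x \<in> unit_ball Y) F" using ballF by eventually_elim (rule wball)
  have wx: "norm (w x - x) \<le> 2 * d x" if x: "x \<in> ball 0 1" for x
  proof -
    have nx: "norm x < 1" using x by simp
    have "w x - P x = (1 / (1 + d x) - 1) *\<^sub>R P x" unfolding w_def by (simp add: scaleR_diff_left)
    also have "1 / (1 + d x) - 1 = - (d x / (1 + d x))" using d0[of x] by (simp add: field_simps)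
    finally have "norm (w x - P x) = d x / (1 + d x) * norm (P x)" using d0[of x] by simp
    also have "\<dots> \<le> d x / (1 + d x) * (1 + d x)"
      using Pn[of x] nx d0[of x] by (intro mult_left_mono) auto
    also have "\<dots> = d x" using d0[of x] by simp
    finally have a: "norm (w x - P x) \<le> d x" .
    have "norm (w x - x) \<le> norm (w x - P x) + norm (P x - x)"
      using norm_triangle_ineq[of "w x - P x" "P x - x"] by simp
    also have "norm (P x - x) = d x" unfolding d_def by (simp add: norm_minus_commute)
    finally show ?thesis using a by simp
  qed
  have fw: "((\<lambda>x. f (w x)) \<longlongrightarrow> c) F"
  proof (rule tendstoI)
    fix e :: real assume e: "e > 0"
    obtain \<delta> where "\<delta> > 0" and \<delta>: "\<forall>x\<in>unit_ball UNIV. \<forall>x'\<in>unit_ball UNIV. dist x' x < \<delta> \<longrightarrow>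
        dist (restr UNIV f x') (restr UNIV f x) < e / 2"
      using Au_D(3)[OF f] e unfolding uniformly_continuous_on_def by (meson half_gt_zero)
    have ev1: "eventually (\<lambda>x. dist (f x) c < e / 2) F" by (rule tendstoD[OF fc]) (use e in simp)
    have ev2: "eventually (\<lambda>x. dist (d x) 0 < \<delta> / 2) F" by (rule tendstoD[OF dlim]) (use \<open>\<delta> > 0\<close> in simp)
    show "eventually (\<lambda>x. dist (f (w x)) c < e) F"
      using ballF ev1 ev2
    proof eventually_elim
      case (elim x)
      have xb: "x \<in> unit_ball UNIV" using elim(1) by (simp add: unit_ball_def)
      have wb: "w x \<in> unit_ball UNIV" using wball[OF elim(1)] by (simp add: unit_ball_def)
      have "dist (w x) x < \<delta>" using wx[OF elim(1)] elim(3) d0[of x] by (simp add: dist_norm)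
      then have "dist (restr UNIV f (w x)) (restr UNIV f x) < e / 2" using \<delta> xb wb by blast
      then have "dist (f (w x)) (f x) < e / 2" using xb wb by (simp add: restr_def)
      then show ?case using elim(2) dist_triangle[of "f (w x)" c "f x"] by simp
    qed
  qed
  have zw: "((\<lambda>x. z (w x)) \<longlongrightarrow> 0) F" if z: "z \<in> cdual Y" for z
  proof -
    have zl: "clinear_on Y z" using z unfolding cdual_def by blast
    obtain Kz where Kz: "Kz \<ge> 0" "\<forall>x\<in>Y. cmod (z x) \<le> Kz * norm x" using cdual_bound[OF z] by blast
    have "clinear_on UNIV (\<lambda>x. z (P x))" unfolding clinear_on_def
    proof (intro conjI ballI allI)
      fix x y :: 'a show "z (P (x + y)) = z (P x) + z (P y)"
        unfolding Pl(1) using clin_add[OF zl] P(5) by blast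
    next
      fix k and x :: 'a show "z (P (k *\<^sub>C x)) = k * z (P x)"
        unfolding Pl(2) using clin_scaleC[OF zl] P(5) by blast
    qed
    moreover have "cbounded_on UNIV (\<lambda>x. z (P x))" unfolding cbounded_on_def
    proof (intro exI[of _ "Kz * (1 + K * M)"] ballI)
      fix x :: 'a
      have "cmod (z (P x)) \<le> Kz * norm (P x)" using Kz P(5) by blast
      also have "norm (P x) \<le> (1 + K * M) * norm x"
      proof -
        have "d x \<le> K * (\<Sum>\<phi>\<in>\<Phi>. cmod (\<phi> x))" using P(6) unfolding d_def by blast
        also have "\<dots> \<le> K * (M * norm x)" by (rule mult_left_mono[OF M(2)[rule_format] P(3)])
        finally show ?thesis using Pn[of x] by (simp add: algebra_simps)
      qed
      then have "Kz * norm (P x) \<le> Kz * ((1 + K * M) * norm x)" by (rule mult_left_mono[OF _ Kz(1)])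
      finally show "cmod (z (P x)) \<le> Kz * (1 + K * M) * norm x" by (simp add: mult.assoc)
    qed
    ultimately have "(\<lambda>x. z (P x)) \<in> cdual UNIV" unfolding cdual_def by blast
    then have "((\<lambda>x. z (P x)) \<longlongrightarrow> 0) F" using wk by blast
    then have t: "((\<lambda>x. cmod (z (P x))) \<longlongrightarrow> 0) F" by (rule tendsto_norm_zero)
    have ev: "eventually (\<lambda>x. norm (z (w x)) \<le> cmod (z (P x))) F"
    proof (rule always_eventually, rule allI)
      fix x
      have "z (w x) = of_real (1 / (1 + d x)) * z (P x)"
        unfolding w_def using clin_scaleR[OF zl P(5)[rule_format]] .
      then have "norm (z (w x)) = norm (of_real (1 / (1 + d x)) :: complex) * cmod (z (P x))"
        by (simp only: norm_mult)
      also have "norm (of_real (1 / (1 + d x)) :: complex) = 1 / (1 + d x)"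
        unfolding norm_of_real using d0[of x] by simp
      finally have "norm (z (w x)) = (1 / (1 + d x)) * cmod (z (P x))" .
      also have "\<dots> \<le> 1 * cmod (z (P x))" using d0[of x] by (intro mult_right_mono) auto
      finally show "norm (z (w x)) \<le> cmod (z (P x))" by simp
    qed
    show ?thesis by (rule Lim_null_comparison[OF ev t])
  qed
  show ?thesis using wYev fw zw by blast
qed

lemma subset_part:
  fixes f :: "'a::{complex_normed_vector, complete_space} \<Rightarrow> complex"
  assumes f: "restr UNIV f \<in> Au UNIV" and c: "c \<in> weak_cluster_0 f"
    and Y: "csubspace Y" "closed Y" "finite_codim Y"
  shows "c \<in> (\<lambda>\<tau>. \<tau> (restr Y f)) ` M0 Y"
proof -
  obtain F where F: "F \<noteq> bot" "eventually (\<lambda>x. x \<in> ball 0 1) F"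
      "\<forall>\<phi>\<in>cdual UNIV. (\<phi> \<longlongrightarrow> 0) F" "(f \<longlongrightarrow> c) F"
    using c unfolding weak_cluster_0_def by blast
  obtain w where w: "eventually (\<lambda>x. w x \<in> unit_ball Y) F" "((\<lambda>x. f (w x)) \<longlongrightarrow> c) F"
      "\<forall>z\<in>cdual Y. ((\<lambda>x. z (w x)) \<longlongrightarrow> 0) F"
    using approx_net[OF f Y F(2,3,4)] by blast
  have "eventually (\<lambda>x. f (w x) = restr Y f (w x)) F"
    using w(1) by eventually_elim (simp add: restr_def)
  then have g0c: "((\<lambda>x. restr Y f (w x)) \<longlongrightarrow> c) F" by (rule Lim_transform_eventually[OF w(2)])
  obtain \<tau> where "\<tau> \<in> M0 Y" "\<tau> (restr Y f) = c"
    using cluster_char[OF Y(1) F(1) w(1) w(3) restr_Au[OF f Y(1)] g0c] by blast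
  then show ?thesis by force
qed

theorem proposition2p6:
  fixes f :: "'a::{complex_normed_vector, complete_space} \<Rightarrow> complex"
  assumes "restr UNIV f \<in> Au UNIV"
  shows "weak_cluster_0 f =
    (\<Inter>Y \<in> {Y. csubspace Y \<and> closed Y \<and> finite_codim Y}.
        (\<lambda>\<tau>. \<tau> (restr Y f)) ` M0 Y)"
proof
  show "weak_cluster_0 f \<subseteq> (\<Inter>Y \<in> {Y. csubspace Y \<and> closed Y \<and> finite_codim Y}. (\<lambda>\<tau>. \<tau> (restr Y f)) ` M0 Y)"
    using subset_part[OF assms] by blast
  show "(\<Inter>Y \<in> {Y. csubspace Y \<and> closed Y \<and> finite_codim Y}. (\<lambda>\<tau>. \<tau> (restr Y f)) ` M0 Y) \<subseteq> weak_cluster_0 f"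
    using supset_part[OF assms] by blast
qed

end
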